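(* Let $\phi:\mathcal G\to\mathcal G'$ be a functor between groupoids which is injective on objects. Then there is a functor $\Upsilon_\phi:\mathcal H^r(\mathcal G)\to\mathcal H^r(\mathcal G')$ extending $\phi$, i.e. sending $H_{g_1}\diamond\dots\diamond H_{g_r}$ to $H_{\phi(g_1)}\diamond\dots\diamond H_{\phi(g_r)}$ and each generating morphism to the generating morphism of the same kind with labels transformed by $\phi$ (e.g. $m_{g,h}\mapsto m_{\phi(g),\phi(h)}$, $\eta_i\mapsto\eta_{\phi(i)}$, $v_g\mapsto v_{\phi(g)}$, $\gamma_{g,h}\mapsto\gamma_{\phi(g),\phi(h)}$). Moreover, if $\phi$ is also faithful (injective on morphisms), then $\Upsilon_\phi$ is faithful.
   Context: Groupoid conventions: a groupoid $\mathcal G$ is a small category in which every morphism is invertible; $\mathcal G$ also denotes its set of morphisms, $\mathcal G(i,j)$ those from $i$ to $j$. Composition left to right: $g\in\mathcal G(i,j)$, $h\in\mathcal G(j,k)$ give $gh\in\mathcal G(i,k)$; $1_i$ identity, $\bar g$ inverse. Braided monoidal categories: product $\diamond$, unit $\mathbf 1$, braiding $\gamma_{A,B}$, $\bar\gamma_{A,B}:=\gamma_{B,A}^{-1}$; constraints suppressed; $\mathrm{id}_g=\mathrm{id}_{H_g}$, $\gamma_{g,h}=\gamma_{H_g,H_h}$, $\bar\gamma_{g,h}=\bar\gamma_{H_g,H_h}$. $\mathcal H^r(\mathcal G)$ (universal ribbon Hopf $\mathcal G$-algebra) is the braided monoidal category freely generated by objects $H_g$ ($g\in\mathcal G$) and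 morphisms $\Delta_g:H_g\to H_g\diamond H_g$, $\epsilon_g:H_g\to\mathbf 1$, $m_{g,h}:H_g\diamond H_h\to H_{gh}$, $\eta_i:\mathbf 1\to H_{1_i}$, $S_g,\bar S_g:H_g\to H_{\bar g}$, $l_i:H_{1_i}\to\mathbf 1$, $L_g:\mathbf 1\to H_g$, $v_g,v_g^{-1}:H_g\to H_g$, subject to the following relations (for composable labels, $g\in\mathcal G(i,j)$): (Hopf) $\Delta$ coassociative; $(\epsilon_g\diamond\mathrm{id})\Delta_g=\mathrm{id}_g=(\mathrm{id}\diamond\epsilon_g)\Delta_g$; $m$ associative; $m_{g,1_j}(\mathrm{id}_g\diamond\eta_j)=\mathrm{id}_g=m_{1_i,g}(\eta_i\diamond\mathrm{id}_g)$; $(m_{g,h}\diamond m_{g,h})(\mathrm{id}_g\diamond\gamma_{g,h}\diamond\mathrm{id}_h)(\Delta_g\diamond\Delta_h)=\Delta_{gh}m_{g,h}$; $\epsilon_{gh}m_{g,h}=\epsilon_g\diamond\epsilon_h$; $\Delta_{1_i}\eta_i=\eta_i\diamond\eta_i$; $\epsilon_{1_i}\eta_i=\mathrm{id}_{\mathbf 1}$; $m_{\bar g,g}(S_g\diamond\mathrm{id}_g)\Delta_g=\eta_j\epsilon_g$; $m_{g,\bar g}(\mathrm{id}_g\diamond S_g)\Delta_g=\eta_i\epsilon_g$; $S_{\bar g}\bar S_g=\bar S_{\bar g}S_g=\mathrm{id}_g$. (Integrals) $(\mathrm{id}_{1_i}\diamond l_i)\Delta_{1_i}=\eta_il_i$;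 $m_{g,h}(L_g\diamond\mathrm{id}_h)=L_{gh}\epsilon_h$; $l_iL_{1_i}=\mathrm{id}_{\mathbf 1}=l_iS_{1_i}L_{1_i}$; $S_gL_g=L_{\bar g}$; $l_iS_{1_i}=l_i$. (Ribbon) $v_gv_g^{-1}=v_g^{-1}v_g=\mathrm{id}_g$; $\epsilon_gv_g=\epsilon_g$; $v_gL_g=L_g$; $S_gv_g=v_{\bar g}S_g$; $m_{g,h}(v_g\diamond\mathrm{id}_h)=v_{gh}m_{g,h}=m_{g,h}(\mathrm{id}_g\diamond v_h)$. Define $\sigma_{i,i}=(v_{1_i}^{-1}\diamond(v_{1_i}^{-1}S_{1_i}))\Delta_{1_i}v_{1_i}\eta_i$ and $\sigma_{i,j}=\eta_i\diamond\eta_j$ for $i\neq j$; for $g\in\mathcal G(p,q)$, $h\in\mathcal G(r,s)$, $k\in\mathrm{Obj}\,\mathcal G$ define $\mu_{g,h}=(m_{g,1_q}\diamond m_{1_r,h})(\mathrm{id}_g\diamond\sigma_{q,r}\diamond\mathrm{id}_h)$, $\rho^r_{g,k}=(m_{g,1_q}\diamond\mathrm{id}_{1_k})(\mathrm{id}_g\diamond\sigma_{q,k})$, $\rho^l_{g,k}=(\mathrm{id}_{1_k}\diamond m_{1_p,g})(\sigma_{k,p}\diamond\mathrm{id}_g)$. Required: each $\sigma_{i,j}$ is a Hopf copairing, i.e. $(\Delta_{1_i}\diamond\mathrm{id}_{1_j})\sigma_{i,j}=(\mathrm{id}_{1_i}\diamond\mathrm{id}_{1_i}\diamond m_{1_j,1_j})(\mathrm{id}_{1_i}\diamond\sigma_{i,j}\diamond\mathrm{id}_{1_j})\sigma_{i,j}$,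 $(\mathrm{id}_{1_i}\diamond\Delta_{1_j})\sigma_{i,j}=(m_{1_i,1_i}\diamond\mathrm{id}_{1_j}\diamond\mathrm{id}_{1_j})(\mathrm{id}_{1_i}\diamond\sigma_{i,j}\diamond\mathrm{id}_{1_j})\sigma_{i,j}$, $(\epsilon_{1_i}\diamond\mathrm{id}_{1_j})\sigma_{i,j}=\eta_j$, $(\mathrm{id}_{1_i}\diamond\epsilon_{1_j})\sigma_{i,j}=\eta_i$; $\Delta_gv_g^{-1}=\mu_{g,g}(v_g^{-1}\diamond v_g^{-1})\bar\gamma_{g,g}\Delta_g$ for all $g$; and for all $g\in\mathcal G(p,i)$, $h\in\mathcal G(j,s)$: $(m_{1_j,h}\diamond m_{g,1_i})(S_{1_j}\diamond(\mu_{h,g}\bar\gamma_{g,h}\mu_{g,h})\diamond S_{1_i})(\rho^l_{g,j}\diamond\rho^r_{h,i})=\gamma_{g,h}$. *)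

theory Defs
  imports Main
begin

record ('o, 'm) groupoid =
  Obj  :: "'o set"
  Mor  :: "'m set"
  dom  :: "'m \<Rightarrow> 'o"
  cod  :: "'m \<Rightarrow> 'o"
  comp :: "'m \<Rightarrow> 'm \<Rightarrow> 'm"   (* comp g h = gh for g in G(i,j), h in G(j,k) *)
  idm  :: "'o \<Rightarrow> 'm"
  inv  :: "'m \<Rightarrow> 'm"

definition is_groupoid :: "('o, 'm) groupoid \<Rightarrow> bool" where
  "is_groupoid G \<longleftrightarrow>
     (\<forall>g\<in>Mor G. dom G g \<in> Obj G \<and> cod G g \<in> Obj G) \<and>
     (\<forall>g\<in>Mor G. \<forall>h\<in>Mor G. cod G g = dom G h \<longrightarrow>
        comp G g h \<in> Mor G \<and> dom G (comp G g h) = dom G g \<and> cod G (comp G g h) = cod G h) \<and>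
     (\<forall>g\<in>Mor G. \<forall>h\<in>Mor G. \<forall>k\<in>Mor G. cod G g = dom G h \<longrightarrow> cod G h = dom G k \<longrightarrow>
        comp G (comp G g h) k = comp G g (comp G h k)) \<and>
     (\<forall>i\<in>Obj G. idm G i \<in> Mor G \<and> dom G (idm G i) = i \<and> cod G (idm G i) = i) \<and>
     (\<forall>g\<in>Mor G. comp G (idm G (dom G g)) g = g \<and> comp G g (idm G (cod G g)) = g) \<and>
     (\<forall>g\<in>Mor G. inv G g \<in> Mor G \<and> dom G (inv G g) = cod G g \<and> cod G (inv G g) = dom G g \<and>
        comp G g (inv G g) = idm G (dom G g) \<and> comp G (inv G g) g = idm G (cod G g))"

definition is_functor ::
  "('o, 'm) groupoid \<Rightarrow> ('p, 'n) groupoid \<Rightarrow> ('o \<Rightarrow> 'p) \<Rightarrow> ('m \<Rightarrow> 'n) \<Rightarrow> bool" where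
  "is_functor G G' Fo Fm \<longleftrightarrow>
     (\<forall>i\<in>Obj G. Fo i \<in> Obj G') \<and>
     (\<forall>g\<in>Mor G. Fm g \<in> Mor G' \<and> dom G' (Fm g) = Fo (dom G g) \<and> cod G' (Fm g) = Fo (cod G g)) \<and>
     (\<forall>g\<in>Mor G. \<forall>h\<in>Mor G. cod G g = dom G h \<longrightarrow> Fm (comp G g h) = comp G' (Fm g) (Fm h)) \<and>
     (\<forall>i\<in>Obj G. Fm (idm G i) = idm G' (Fo i))"

text \<open>Objects of H^r(G) are words H_{g1} <> ... <> H_{gr}, represented as lists of
  morphisms of G (the unit 1 is the empty list).  Morphisms are equivalence classes of
  well-formed terms.  f \<odot> g is the composite "f g" of the paper (first g, then f).\<close>

datatype ('o, 'm) tm =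
    Id "'m list"
  | Comp "('o, 'm) tm" "('o, 'm) tm"  (infixr "\<odot>" 55)
  | Tens "('o, 'm) tm" "('o, 'm) tm"  (infixr "\<diamond>" 60)
  | Br "'m list" "'m list"
  | BrInv "'m list" "'m list"
  | Delta 'm | Eps 'm | Mult 'm 'm | Eta 'o
  | S 'm | Sbar 'm | Lsm 'o | Lbig 'm | V 'm | Vinv 'm

fun src :: "('o, 'm) groupoid \<Rightarrow> ('o, 'm) tm \<Rightarrow> 'm list" where
  "src G (Id A) = A"
| "src G (f \<odot> g) = src G g"
| "src G (f \<diamond> g) = src G f @ src G g"
| "src G (Br A B) = A @ B"
| "src G (BrInv A B) = B @ A"
| "src G (Delta g) = [g]"
| "src G (Eps g) = [g]"
| "src G (Mult g h) = [g, h]"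
| "src G (Eta i) = []"
| "src G (S g) = [g]"
| "src G (Sbar g) = [g]"
| "src G (Lsm i) = [idm G i]"
| "src G (Lbig g) = []"
| "src G (V g) = [g]"
| "src G (Vinv g) = [g]"

fun trg :: "('o, 'm) groupoid \<Rightarrow> ('o, 'm) tm \<Rightarrow> 'm list" where
  "trg G (Id A) = A"
| "trg G (f \<odot> g) = trg G f"
| "trg G (f \<diamond> g) = trg G f @ trg G g"
| "trg G (Br A B) = B @ A"
| "trg G (BrInv A B) = A @ B"
| "trg G (Delta g) = [g, g]"
| "trg G (Eps g) = []"
| "trg G (Mult g h) = [comp G g h]"
| "trg G (Eta i) = [idm G i]"
| "trg G (S g) = [inv G g]"
| "trg G (Sbar g) = [inv G g]"
| "trg G (Lsm i) = []"
| "trg G (Lbig g) = [g]"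
| "trg G (V g) = [g]"
| "trg G (Vinv g) = [g]"

fun wf :: "('o, 'm) groupoid \<Rightarrow> ('o, 'm) tm \<Rightarrow> bool" where
  "wf G (Id A) = (set A \<subseteq> Mor G)"
| "wf G (f \<odot> g) = (wf G f \<and> wf G g \<and> trg G g = src G f)"
| "wf G (f \<diamond> g) = (wf G f \<and> wf G g)"
| "wf G (Br A B) = (set A \<subseteq> Mor G \<and> set B \<subseteq> Mor G)"
| "wf G (BrInv A B) = (set A \<subseteq> Mor G \<and> set B \<subseteq> Mor G)"
| "wf G (Delta g) = (g \<in> Mor G)"
| "wf G (Eps g) = (g \<in> Mor G)"
| "wf G (Mult g h) = (g \<in> Mor G \<and> h \<in> Mor G \<and> cod G g = dom G h)"
| "wf G (Eta i) = (i \<in> Obj G)"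
| "wf G (S g) = (g \<in> Mor G)"
| "wf G (Sbar g) = (g \<in> Mor G)"
| "wf G (Lsm i) = (i \<in> Obj G)"
| "wf G (Lbig g) = (g \<in> Mor G)"
| "wf G (V g) = (g \<in> Mor G)"
| "wf G (Vinv g) = (g \<in> Mor G)"

abbreviation ident :: "'m \<Rightarrow> ('o, 'm) tm" where "ident g \<equiv> Id [g]"

abbreviation BrBar :: "'m list \<Rightarrow> 'm list \<Rightarrow> ('o, 'm) tm" where
  "BrBar A B \<equiv> BrInv B A"   (* gamma-bar_{A,B} = gamma_{B,A}^{-1} : A<>B -> B<>A *)

definition sig :: "('o, 'm) groupoid \<Rightarrow> 'o \<Rightarrow> 'o \<Rightarrow> ('o, 'm) tm" where
  "sig G i j = (if i = j then
      (Vinv (idm G i) \<diamond> (Vinv (idm G i) \<odot> S (idm G i))) \<odot> Delta (idm G i) \<odot> V (idm G i) \<odot> Eta i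
    else Eta i \<diamond> Eta j)"

definition mu :: "('o, 'm) groupoid \<Rightarrow> 'm \<Rightarrow> 'm \<Rightarrow> ('o, 'm) tm" where
  "mu G g h = (Mult g (idm G (cod G g)) \<diamond> Mult (idm G (dom G h)) h)
      \<odot> (ident g \<diamond> sig G (cod G g) (dom G h) \<diamond> ident h)"

definition rho_r :: "('o, 'm) groupoid \<Rightarrow> 'm \<Rightarrow> 'o \<Rightarrow> ('o, 'm) tm" where
  "rho_r G g k = (Mult g (idm G (cod G g)) \<diamond> ident (idm G k)) \<odot> (ident g \<diamond> sig G (cod G g) k)"

definition rho_l :: "('o, 'm) groupoid \<Rightarrow> 'm \<Rightarrow> 'o \<Rightarrow> ('o, 'm) tm" where
  "rho_l G g k = (ident (idm G k) \<diamond> Mult (idm G (dom G g)) g) \<odot> (sig G k (dom G g) \<diamond> ident g)"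

text \<open>Axiom schemata: strict braided monoidal category axioms plus the relations of the
  universal ribbon Hopf G-algebra.  An instance is only used when both sides are
  well-formed with equal source and target (see hreq), which enforces composability.\<close>

inductive_set hr_ax :: "('o, 'm) groupoid \<Rightarrow> (('o, 'm) tm \<times> ('o, 'm) tm) set"
  for G :: "('o, 'm) groupoid" where
  c_assoc: "((f \<odot> g) \<odot> h, f \<odot> (g \<odot> h)) \<in> hr_ax G"
| c_idl: "(Id A \<odot> f, f) \<in> hr_ax G"
| c_idr: "(f \<odot> Id A, f) \<in> hr_ax G"
| t_assoc: "((f \<diamond> g) \<diamond> h, f \<diamond> (g \<diamond> h)) \<in> hr_ax G"
| t_unitl: "(Id [] \<diamond> f, f) \<in> hr_ax G"
| t_unitr: "(f \<diamond> Id [], f) \<in> hr_ax G"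
| t_id: "(Id A \<diamond> Id B, Id (A @ B)) \<in> hr_ax G"
| t_interchange: "((f \<odot> g) \<diamond> (f' \<odot> g'), (f \<diamond> f') \<odot> (g \<diamond> g')) \<in> hr_ax G"
| b_inv1: "(BrInv A B \<odot> Br A B, Id (A @ B)) \<in> hr_ax G"
| b_inv2: "(Br A B \<odot> BrInv A B, Id (B @ A)) \<in> hr_ax G"
| b_nat: "(Br (trg G f) (trg G g) \<odot> (f \<diamond> g), (g \<diamond> f) \<odot> Br (src G f) (src G g)) \<in> hr_ax G"
| b_hex1: "(Br A (B @ C), (Id B \<diamond> Br A C) \<odot> (Br A B \<diamond> Id C)) \<in> hr_ax G"
| b_hex2: "(Br (A @ B) C, (Br A C \<diamond> Id B) \<odot> (Id A \<diamond> Br B C)) \<in> hr_ax G"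
| h_coassoc: "((Delta g \<diamond> ident g) \<odot> Delta g, (ident g \<diamond> Delta g) \<odot> Delta g) \<in> hr_ax G"
| h_counitl: "((Eps g \<diamond> ident g) \<odot> Delta g, ident g) \<in> hr_ax G"
| h_counitr: "((ident g \<diamond> Eps g) \<odot> Delta g, ident g) \<in> hr_ax G"
| h_massoc: "(Mult (comp G g h) k \<odot> (Mult g h \<diamond> ident k),
              Mult g (comp G h k) \<odot> (ident g \<diamond> Mult h k)) \<in> hr_ax G"
| h_unitr: "(Mult g (idm G (cod G g)) \<odot> (ident g \<diamond> Eta (cod G g)), ident g) \<in> hr_ax G"
| h_unitl: "(Mult (idm G (dom G g)) g \<odot> (Eta (dom G g) \<diamond> ident g), ident g) \<in> hr_ax G"
| h_bialg: "((Mult g h \<diamond> Mult g h) \<odot> (ident g \<diamond> Br [g] [h] \<diamond> ident h) \<odot> (Delta g \<diamond> Delta h),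
             Delta (comp G g h) \<odot> Mult g h) \<in> hr_ax G"
| h_epsm: "(Eps (comp G g h) \<odot> Mult g h, Eps g \<diamond> Eps h) \<in> hr_ax G"
| h_deltaeta: "(Delta (idm G i) \<odot> Eta i, Eta i \<diamond> Eta i) \<in> hr_ax G"
| h_epseta: "(Eps (idm G i) \<odot> Eta i, Id []) \<in> hr_ax G"
| h_antipl: "(Mult (inv G g) g \<odot> (S g \<diamond> ident g) \<odot> Delta g, Eta (cod G g) \<odot> Eps g) \<in> hr_ax G"
| h_antipr: "(Mult g (inv G g) \<odot> (ident g \<diamond> S g) \<odot> Delta g, Eta (dom G g) \<odot> Eps g) \<in> hr_ax G"
| h_sinv1: "(S (inv G g) \<odot> Sbar g, ident g) \<in> hr_ax G"
| h_sinv2: "(Sbar (inv G g) \<odot> S g, ident g) \<in> hr_ax G"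
| i_left: "((ident (idm G i) \<diamond> Lsm i) \<odot> Delta (idm G i), Eta i \<odot> Lsm i) \<in> hr_ax G"
| i_right: "(Mult g h \<odot> (Lbig g \<diamond> ident h), Lbig (comp G g h) \<odot> Eps h) \<in> hr_ax G"
| i_norm1: "(Lsm i \<odot> Lbig (idm G i), Id []) \<in> hr_ax G"
| i_norm2: "(Lsm i \<odot> S (idm G i) \<odot> Lbig (idm G i), Id []) \<in> hr_ax G"
| i_SL: "(S g \<odot> Lbig g, Lbig (inv G g)) \<in> hr_ax G"
| i_lS: "(Lsm i \<odot> S (idm G i), Lsm i) \<in> hr_ax G"
| r_vinv1: "(V g \<odot> Vinv g, ident g) \<in> hr_ax G"
| r_vinv2: "(Vinv g \<odot> V g, ident g) \<in> hr_ax G"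
| r_epsv: "(Eps g \<odot> V g, Eps g) \<in> hr_ax G"
| r_vL: "(V g \<odot> Lbig g, Lbig g) \<in> hr_ax G"
| r_Sv: "(S g \<odot> V g, V (inv G g) \<odot> S g) \<in> hr_ax G"
| r_mv1: "(Mult g h \<odot> (V g \<diamond> ident h), V (comp G g h) \<odot> Mult g h) \<in> hr_ax G"
| r_mv2: "(Mult g h \<odot> (ident g \<diamond> V h), V (comp G g h) \<odot> Mult g h) \<in> hr_ax G"
| r_cop1: "((Delta (idm G i) \<diamond> ident (idm G j)) \<odot> sig G i j,
            (ident (idm G i) \<diamond> ident (idm G i) \<diamond> Mult (idm G j) (idm G j))
              \<odot> (ident (idm G i) \<diamond> sig G i j \<diamond> ident (idm G j)) \<odot> sig G i j) \<in> hr_ax G"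
| r_cop2: "((ident (idm G i) \<diamond> Delta (idm G j)) \<odot> sig G i j,
            (Mult (idm G i) (idm G i) \<diamond> ident (idm G j) \<diamond> ident (idm G j))
              \<odot> (ident (idm G i) \<diamond> sig G i j \<diamond> ident (idm G j)) \<odot> sig G i j) \<in> hr_ax G"
| r_cop3: "((Eps (idm G i) \<diamond> ident (idm G j)) \<odot> sig G i j, Eta j) \<in> hr_ax G"
| r_cop4: "((ident (idm G i) \<diamond> Eps (idm G j)) \<odot> sig G i j, Eta i) \<in> hr_ax G"
| r_twist: "(Delta g \<odot> Vinv g, mu G g g \<odot> (Vinv g \<diamond> Vinv g) \<odot> BrBar [g] [g] \<odot> Delta g) \<in> hr_ax G"
| r_braid: "((Mult (idm G (dom G h)) h \<diamond> Mult g (idm G (cod G g)))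
              \<odot> (S (idm G (dom G h)) \<diamond> (mu G h g \<odot> BrBar [g] [h] \<odot> mu G g h) \<diamond> S (idm G (cod G g)))
              \<odot> (rho_l G g (dom G h) \<diamond> rho_r G h (cod G g)),
            Br [g] [h]) \<in> hr_ax G"

inductive hreq :: "('o, 'm) groupoid \<Rightarrow> ('o, 'm) tm \<Rightarrow> ('o, 'm) tm \<Rightarrow> bool"
  for G :: "('o, 'm) groupoid" where
  ax: "(l, r) \<in> hr_ax G \<Longrightarrow> wf G l \<Longrightarrow> wf G r \<Longrightarrow> src G l = src G r \<Longrightarrow>
       trg G l = trg G r \<Longrightarrow> hreq G l r"
| refl: "wf G t \<Longrightarrow> hreq G t t"
| sym: "hreq G t u \<Longrightarrow> hreq G u t"
| trans: "hreq G t u \<Longrightarrow> hreq G u w \<Longrightarrow> hreq G t w"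
| comp_cong: "hreq G f f' \<Longrightarrow> hreq G g g' \<Longrightarrow> wf G (f \<odot> g) \<Longrightarrow> hreq G (f \<odot> g) (f' \<odot> g')"
| tens_cong: "hreq G f f' \<Longrightarrow> hreq G g g' \<Longrightarrow> hreq G (f \<diamond> g) (f' \<diamond> g')"

abbreviation Upsilon :: "('o \<Rightarrow> 'p) \<Rightarrow> ('m \<Rightarrow> 'n) \<Rightarrow> ('o, 'm) tm \<Rightarrow> ('p, 'n) tm" where
  "Upsilon Fo Fm \<equiv> map_tm Fo Fm"

end

theory Submission
  imports Defs
begin

context fixes G :: "('o,'m) groupoid" assumes gpd: "is_groupoid G"
begin
lemma g_dc: "g \<in> Mor G \<Longrightarrow> groupoid.dom G g \<in> Obj G \<and> cod G g \<in> Obj G"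
  using gpd unfolding is_groupoid_def by blast
lemma g_comp: "g \<in> Mor G \<Longrightarrow> h \<in> Mor G \<Longrightarrow> cod G g = groupoid.dom G h \<Longrightarrow>
  groupoid.comp G g h \<in> Mor G \<and> groupoid.dom G (groupoid.comp G g h) = groupoid.dom G g \<and> cod G (groupoid.comp G g h) = cod G h"
  using gpd unfolding is_groupoid_def by blast
lemma g_assoc: "g \<in> Mor G \<Longrightarrow> h \<in> Mor G \<Longrightarrow> k \<in> Mor G \<Longrightarrow> cod G g = groupoid.dom G h \<Longrightarrow> cod G h = groupoid.dom G k \<Longrightarrow>
  groupoid.comp G (groupoid.comp G g h) k = groupoid.comp G g (groupoid.comp G h k)"
  using gpd unfolding is_groupoid_def by blast
lemma g_id: "i \<in> Obj G \<Longrightarrow> idm G i \<in> Mor G \<and> groupoid.dom G (idm G i) = i \<and> cod G (idm G i) = i"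
  using gpd unfolding is_groupoid_def by blast
lemma g_unit: "g \<in> Mor G \<Longrightarrow> groupoid.comp G (idm G (groupoid.dom G g)) g = g \<and> groupoid.comp G g (idm G (cod G g)) = g"
  using gpd unfolding is_groupoid_def by blast
lemma g_inv: "g \<in> Mor G \<Longrightarrow> groupoid.inv G g \<in> Mor G \<and> groupoid.dom G (groupoid.inv G g) = cod G g \<and> cod G (groupoid.inv G g) = groupoid.dom G g \<and>
        groupoid.comp G g (groupoid.inv G g) = idm G (groupoid.dom G g) \<and> groupoid.comp G (groupoid.inv G g) g = idm G (cod G g)"
  using gpd unfolding is_groupoid_def by blast

lemma g_inv_unique:
  assumes "g \<in> Mor G" "h \<in> Mor G" "groupoid.dom G h = cod G g" "groupoid.comp G g h = idm G (groupoid.dom G g)"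
  shows "groupoid.inv G g = h"
proof -
  have "groupoid.inv G g = groupoid.comp G (groupoid.inv G g) (idm G (groupoid.dom G g))"
    using g_unit[of "groupoid.inv G g"] g_inv[OF assms(1)] by simp
  also have "\<dots> = groupoid.comp G (groupoid.inv G g) (groupoid.comp G g h)" using assms by simp
  also have "\<dots> = groupoid.comp G (groupoid.comp G (groupoid.inv G g) g) h"
    using g_assoc[of "groupoid.inv G g" g h] g_inv[OF assms(1)] assms by simp
  also have "\<dots> = h" using g_inv[OF assms(1)] g_unit[OF assms(2)] assms by simp
  finally show ?thesis .
qed

lemma g_inv_idm: "i \<in> Obj G \<Longrightarrow> groupoid.inv G (idm G i) = idm G i"
  using g_inv_unique[of "idm G i" "idm G i"] g_id[of i] g_unit[of "idm G i"] by simp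

lemma g_inv_inv: "g \<in> Mor G \<Longrightarrow> groupoid.inv G (groupoid.inv G g) = g"
  using g_inv_unique[of "groupoid.inv G g" g] g_inv[of g] by simp

lemma g_cancel: "g \<in> Mor G \<Longrightarrow> h \<in> Mor G \<Longrightarrow> cod G g = groupoid.dom G h \<Longrightarrow>
   groupoid.comp G (groupoid.comp G g h) (groupoid.inv G h) = g"
  using g_assoc[of g h "groupoid.inv G h"] g_inv[of h] g_unit[of g] by simp

lemma src_mor: "wf G t \<Longrightarrow> set (src G t) \<subseteq> Mor G \<and> set (trg G t) \<subseteq> Mor G"
  by (induction t) (auto simp: g_comp g_id g_inv)

lemma gs_dom: "g \<in> Mor G \<Longrightarrow> groupoid.dom G g \<in> Obj G" using g_dc by blast
lemma gs_cod: "g \<in> Mor G \<Longrightarrow> cod G g \<in> Obj G" using g_dc by blast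
lemma gs_comp: "g \<in> Mor G \<Longrightarrow> h \<in> Mor G \<Longrightarrow> cod G g = groupoid.dom G h \<Longrightarrow> groupoid.comp G g h \<in> Mor G" using g_comp by blast
lemma gs_comp_dom: "g \<in> Mor G \<Longrightarrow> h \<in> Mor G \<Longrightarrow> cod G g = groupoid.dom G h \<Longrightarrow> groupoid.dom G (groupoid.comp G g h) = groupoid.dom G g" using g_comp by blast
lemma gs_comp_cod: "g \<in> Mor G \<Longrightarrow> h \<in> Mor G \<Longrightarrow> cod G g = groupoid.dom G h \<Longrightarrow> cod G (groupoid.comp G g h) = cod G h" using g_comp by blast
lemma gs_id: "i \<in> Obj G \<Longrightarrow> idm G i \<in> Mor G" using g_id by blast
lemma gs_id_dom: "i \<in> Obj G \<Longrightarrow> groupoid.dom G (idm G i) = i" using g_id by blast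
lemma gs_id_cod: "i \<in> Obj G \<Longrightarrow> cod G (idm G i) = i" using g_id by blast
lemma gs_inv: "g \<in> Mor G \<Longrightarrow> groupoid.inv G g \<in> Mor G" using g_inv by blast
lemma gs_inv_dom: "g \<in> Mor G \<Longrightarrow> groupoid.dom G (groupoid.inv G g) = cod G g" using g_inv by blast
lemma gs_inv_cod: "g \<in> Mor G \<Longrightarrow> cod G (groupoid.inv G g) = groupoid.dom G g" using g_inv by blast
lemmas gs = gs_dom gs_cod gs_comp gs_comp_dom gs_comp_cod gs_id gs_id_dom gs_id_cod gs_inv gs_inv_dom gs_inv_cod
end

context fixes G :: "('o,'m) groupoid" and G' :: "('p,'n) groupoid" and Fo Fm
  assumes gG: "is_groupoid G" and gG': "is_groupoid G'" and fnc: "is_functor G G' Fo Fm"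
begin
lemma f_obj: "i \<in> Obj G \<Longrightarrow> Fo i \<in> Obj G'" using fnc unfolding is_functor_def by blast
lemma f_mor: "g \<in> Mor G \<Longrightarrow> Fm g \<in> Mor G' \<and> groupoid.dom G' (Fm g) = Fo (groupoid.dom G g) \<and> cod G' (Fm g) = Fo (cod G g)"
  using fnc unfolding is_functor_def by blast
lemma f_comp: "g \<in> Mor G \<Longrightarrow> h \<in> Mor G \<Longrightarrow> cod G g = groupoid.dom G h \<Longrightarrow> Fm (groupoid.comp G g h) = groupoid.comp G' (Fm g) (Fm h)"
  using fnc unfolding is_functor_def by blast
lemma f_id: "i \<in> Obj G \<Longrightarrow> Fm (idm G i) = idm G' (Fo i)"
  using fnc unfolding is_functor_def by blast
lemma f_inv: "g \<in> Mor G \<Longrightarrow> Fm (groupoid.inv G g) = groupoid.inv G' (Fm g)"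
proof -
  assume g: "g \<in> Mor G"
  have "groupoid.comp G' (Fm g) (Fm (groupoid.inv G g)) = Fm (idm G (groupoid.dom G g))"
    using f_comp[of g "groupoid.inv G g"] g_inv[OF gG g] g by simp
  also have "\<dots> = idm G' (groupoid.dom G' (Fm g))" using f_id g_dc[OF gG g] f_mor[OF g] by simp
  finally show ?thesis using g_inv_unique[OF gG', of "Fm g" "Fm (groupoid.inv G g)"] f_mor[OF g] f_mor[of "groupoid.inv G g"] g_inv[OF gG g]
    by simp
qed

lemma fs_mor: "g \<in> Mor G \<Longrightarrow> Fm g \<in> Mor G'" using f_mor by blast
lemma fs_dom: "g \<in> Mor G \<Longrightarrow> groupoid.dom G' (Fm g) = Fo (groupoid.dom G g)" using f_mor by blast
lemma fs_cod: "g \<in> Mor G \<Longrightarrow> cod G' (Fm g) = Fo (cod G g)" using f_mor by blast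
lemmas fsimps = f_obj fs_mor fs_dom fs_cod f_comp f_id f_inv gs[OF gG]

lemma ups_wf: "wf G t \<Longrightarrow> wf G' (map_tm Fo Fm t) \<and> src G' (map_tm Fo Fm t) = map Fm (src G t)
    \<and> trg G' (map_tm Fo Fm t) = map Fm (trg G t)"
  by (induction t) (auto simp: fsimps)

context assumes inj: "inj_on Fo (Obj G)"
begin
lemma ups_sig: "i \<in> Obj G \<Longrightarrow> j \<in> Obj G \<Longrightarrow> map_tm Fo Fm (sig G i j) = sig G' (Fo i) (Fo j)"
  using inj unfolding sig_def inj_on_def by (auto simp: fsimps)
lemma ups_mu: "g \<in> Mor G \<Longrightarrow> h \<in> Mor G \<Longrightarrow> map_tm Fo Fm (mu G g h) = mu G' (Fm g) (Fm h)"
  unfolding mu_def by (simp add: fsimps ups_sig)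
lemma ups_rho_r: "g \<in> Mor G \<Longrightarrow> k \<in> Obj G \<Longrightarrow> map_tm Fo Fm (rho_r G g k) = rho_r G' (Fm g) (Fo k)"
  unfolding rho_r_def by (simp add: fsimps ups_sig)
lemma ups_rho_l: "g \<in> Mor G \<Longrightarrow> k \<in> Obj G \<Longrightarrow> map_tm Fo Fm (rho_l G g k) = rho_l G' (Fm g) (Fo k)"
  unfolding rho_l_def by (simp add: fsimps ups_sig)

lemma ups_ax: assumes ax: "(l, r) \<in> hr_ax G" and wl: "wf G l" and wr: "wf G r"
  shows "(map_tm Fo Fm l, map_tm Fo Fm r) \<in> hr_ax G'"
  using ax
proof (cases rule: hr_ax.cases)
  case (c_assoc f g h)
  then show ?thesis using wl wr hr_ax.c_assoc[where G=G' and f="map_tm Fo Fm f" and g="map_tm Fo Fm g" and h="map_tm Fo Fm h"]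
    by (simp add: fsimps ups_sig ups_mu ups_rho_r ups_rho_l)
  next
  case (c_idl A)
  then show ?thesis using wl wr hr_ax.c_idl[where G=G' and A="map Fm A" and f="map_tm Fo Fm r"]
    by (simp add: fsimps ups_sig ups_mu ups_rho_r ups_rho_l)
  next
  case (c_idr A)
  then show ?thesis using wl wr hr_ax.c_idr[where G=G' and f="map_tm Fo Fm r" and A="map Fm A"]
    by (simp add: fsimps ups_sig ups_mu ups_rho_r ups_rho_l)
  next
  case (t_assoc f g h)
  then show ?thesis using wl wr hr_ax.t_assoc[where G=G' and f="map_tm Fo Fm f" and g="map_tm Fo Fm g" and h="map_tm Fo Fm h"]
    by (simp add: fsimps ups_sig ups_mu ups_rho_r ups_rho_l)
  next
  case (t_unitl)
  then show ?thesis using wl wr hr_ax.t_unitl[where G=G' and f="map_tm Fo Fm r"]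
    by (simp add: fsimps ups_sig ups_mu ups_rho_r ups_rho_l)
  next
  case (t_unitr)
  then show ?thesis using wl wr hr_ax.t_unitr[where G=G' and f="map_tm Fo Fm r"]
    by (simp add: fsimps ups_sig ups_mu ups_rho_r ups_rho_l)
  next
  case (t_id A B)
  then show ?thesis using wl wr hr_ax.t_id[where G=G' and A="map Fm A" and B="map Fm B"]
    by (simp add: fsimps ups_sig ups_mu ups_rho_r ups_rho_l)
  next
  case (t_interchange f g f' g')
  then show ?thesis using wl wr hr_ax.t_interchange[where G=G' and f="map_tm Fo Fm f" and g="map_tm Fo Fm g" and f'="map_tm Fo Fm f'" and g'="map_tm Fo Fm g'"]
    by (simp add: fsimps ups_sig ups_mu ups_rho_r ups_rho_l)
  next
  case (b_inv1 A B)
  then show ?thesis using wl wr hr_ax.b_inv1[where G=G' and A="map Fm A" and B="map Fm B"]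
    by (simp add: fsimps ups_sig ups_mu ups_rho_r ups_rho_l)
  next
  case (b_inv2 A B)
  then show ?thesis using wl wr hr_ax.b_inv2[where G=G' and A="map Fm A" and B="map Fm B"]
    by (simp add: fsimps ups_sig ups_mu ups_rho_r ups_rho_l)
  next
  case (b_nat f g)
  then show ?thesis using wl wr hr_ax.b_nat[where G=G' and f="map_tm Fo Fm f" and g="map_tm Fo Fm g"] ups_wf[of f] ups_wf[of g]
    by (simp add: fsimps ups_sig ups_mu ups_rho_r ups_rho_l)
  next
  case (b_hex1 A B C)
  then show ?thesis using wl wr hr_ax.b_hex1[where G=G' and A="map Fm A" and B="map Fm B" and C="map Fm C"]
    by (simp add: fsimps ups_sig ups_mu ups_rho_r ups_rho_l)
  next
  case (b_hex2 A B C)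
  then show ?thesis using wl wr hr_ax.b_hex2[where G=G' and A="map Fm A" and B="map Fm B" and C="map Fm C"]
    by (simp add: fsimps ups_sig ups_mu ups_rho_r ups_rho_l)
  next
  case (h_coassoc g)
  have "g \<in> Mor G"
    using wl unfolding h_coassoc by (auto simp: gs[OF gG] sig_def split: if_splits)
  then show ?thesis unfolding h_coassoc using hr_ax.h_coassoc[where G=G' and g="Fm g"]
    by (simp add: fsimps ups_sig ups_mu ups_rho_r ups_rho_l)
  next
  case (h_counitl g)
  have "g \<in> Mor G"
    using wl unfolding h_counitl by (auto simp: gs[OF gG] sig_def split: if_splits)
  then show ?thesis unfolding h_counitl using hr_ax.h_counitl[where G=G' and g="Fm g"]
    by (simp add: fsimps ups_sig ups_mu ups_rho_r ups_rho_l)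
  next
  case (h_counitr g)
  have "g \<in> Mor G"
    using wl unfolding h_counitr by (auto simp: gs[OF gG] sig_def split: if_splits)
  then show ?thesis unfolding h_counitr using hr_ax.h_counitr[where G=G' and g="Fm g"]
    by (simp add: fsimps ups_sig ups_mu ups_rho_r ups_rho_l)
  next
  case (h_massoc g h k)
  have "g \<in> Mor G \<and> h \<in> Mor G \<and> k \<in> Mor G \<and> cod G g = groupoid.dom G h \<and> cod G h = groupoid.dom G k"
    using wl unfolding h_massoc by (auto simp: gs[OF gG] sig_def split: if_splits)
  then show ?thesis unfolding h_massoc using hr_ax.h_massoc[where G=G' and g="Fm g" and h="Fm h" and k="Fm k"]
    by (simp add: fsimps)
  next
  case (h_unitr g)
  have "g \<in> Mor G"
    using wl unfolding h_unitr by (auto simp: gs[OF gG] sig_def split: if_splits)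
  then show ?thesis unfolding h_unitr using hr_ax.h_unitr[where G=G' and g="Fm g"]
    by (simp add: fsimps ups_sig ups_mu ups_rho_r ups_rho_l)
  next
  case (h_unitl g)
  have "g \<in> Mor G"
    using wl unfolding h_unitl by (auto simp: gs[OF gG] sig_def split: if_splits)
  then show ?thesis unfolding h_unitl using hr_ax.h_unitl[where G=G' and g="Fm g"]
    by (simp add: fsimps ups_sig ups_mu ups_rho_r ups_rho_l)
  next
  case (h_bialg g h)
  have "g \<in> Mor G \<and> h \<in> Mor G \<and> cod G g = groupoid.dom G h"
    using wl unfolding h_bialg by (auto simp: gs[OF gG] sig_def split: if_splits)
  then show ?thesis unfolding h_bialg using hr_ax.h_bialg[where G=G' and g="Fm g" and h="Fm h"]
    by (simp add: fsimps ups_sig ups_mu ups_rho_r ups_rho_l)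
  next
  case (h_epsm g h)
  have "g \<in> Mor G \<and> h \<in> Mor G \<and> cod G g = groupoid.dom G h"
    using wl unfolding h_epsm by (auto simp: gs[OF gG] sig_def split: if_splits)
  then show ?thesis unfolding h_epsm using hr_ax.h_epsm[where G=G' and g="Fm g" and h="Fm h"]
    by (simp add: fsimps ups_sig ups_mu ups_rho_r ups_rho_l)
  next
  case (h_deltaeta i)
  have "i \<in> Obj G"
    using wl unfolding h_deltaeta by (auto simp: gs[OF gG] sig_def split: if_splits)
  then show ?thesis unfolding h_deltaeta using hr_ax.h_deltaeta[where G=G' and i="Fo i"]
    by (simp add: fsimps ups_sig ups_mu ups_rho_r ups_rho_l)
  next
  case (h_epseta i)
  have "i \<in> Obj G"
    using wl unfolding h_epseta by (auto simp: gs[OF gG] sig_def split: if_splits)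
  then show ?thesis unfolding h_epseta using hr_ax.h_epseta[where G=G' and i="Fo i"]
    by (simp add: fsimps ups_sig ups_mu ups_rho_r ups_rho_l)
  next
  case (h_antipl g)
  have "g \<in> Mor G"
    using wl unfolding h_antipl by (auto simp: gs[OF gG] sig_def split: if_splits)
  then show ?thesis unfolding h_antipl using hr_ax.h_antipl[where G=G' and g="Fm g"]
    by (simp add: fsimps ups_sig ups_mu ups_rho_r ups_rho_l)
  next
  case (h_antipr g)
  have "g \<in> Mor G"
    using wl unfolding h_antipr by (auto simp: gs[OF gG] sig_def split: if_splits)
  then show ?thesis unfolding h_antipr using hr_ax.h_antipr[where G=G' and g="Fm g"]
    by (simp add: fsimps ups_sig ups_mu ups_rho_r ups_rho_l)
  next
  case (h_sinv1 g)
  have "g \<in> Mor G"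
    using wl unfolding h_sinv1 by (auto simp: gs[OF gG] sig_def split: if_splits)
  then show ?thesis unfolding h_sinv1 using hr_ax.h_sinv1[where G=G' and g="Fm g"]
    by (simp add: fsimps ups_sig ups_mu ups_rho_r ups_rho_l)
  next
  case (h_sinv2 g)
  have "g \<in> Mor G"
    using wl unfolding h_sinv2 by (auto simp: gs[OF gG] sig_def split: if_splits)
  then show ?thesis unfolding h_sinv2 using hr_ax.h_sinv2[where G=G' and g="Fm g"]
    by (simp add: fsimps ups_sig ups_mu ups_rho_r ups_rho_l)
  next
  case (i_left i)
  have "i \<in> Obj G"
    using wl unfolding i_left by (auto simp: gs[OF gG] sig_def split: if_splits)
  then show ?thesis unfolding i_left using hr_ax.i_left[where G=G' and i="Fo i"]
    by (simp add: fsimps ups_sig ups_mu ups_rho_r ups_rho_l)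
  next
  case (i_right g h)
  have "g \<in> Mor G \<and> h \<in> Mor G \<and> cod G g = groupoid.dom G h"
    using wl unfolding i_right by (auto simp: gs[OF gG] sig_def split: if_splits)
  then show ?thesis unfolding i_right using hr_ax.i_right[where G=G' and g="Fm g" and h="Fm h"]
    by (simp add: fsimps ups_sig ups_mu ups_rho_r ups_rho_l)
  next
  case (i_norm1 i)
  have "i \<in> Obj G"
    using wl unfolding i_norm1 by (auto simp: gs[OF gG] sig_def split: if_splits)
  then show ?thesis unfolding i_norm1 using hr_ax.i_norm1[where G=G' and i="Fo i"]
    by (simp add: fsimps ups_sig ups_mu ups_rho_r ups_rho_l)
  next
  case (i_norm2 i)
  have "i \<in> Obj G"
    using wl unfolding i_norm2 by (auto simp: gs[OF gG] sig_def split: if_splits)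
  then show ?thesis unfolding i_norm2 using hr_ax.i_norm2[where G=G' and i="Fo i"]
    by (simp add: fsimps ups_sig ups_mu ups_rho_r ups_rho_l)
  next
  case (i_SL g)
  have "g \<in> Mor G"
    using wl unfolding i_SL by (auto simp: gs[OF gG] sig_def split: if_splits)
  then show ?thesis unfolding i_SL using hr_ax.i_SL[where G=G' and g="Fm g"]
    by (simp add: fsimps ups_sig ups_mu ups_rho_r ups_rho_l)
  next
  case (i_lS i)
  have "i \<in> Obj G"
    using wl unfolding i_lS by (auto simp: gs[OF gG] sig_def split: if_splits)
  then show ?thesis unfolding i_lS using hr_ax.i_lS[where G=G' and i="Fo i"]
    by (simp add: fsimps ups_sig ups_mu ups_rho_r ups_rho_l)
  next
  case (r_vinv1 g)
  have "g \<in> Mor G"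
    using wl unfolding r_vinv1 by (auto simp: gs[OF gG] sig_def split: if_splits)
  then show ?thesis unfolding r_vinv1 using hr_ax.r_vinv1[where G=G' and g="Fm g"]
    by (simp add: fsimps ups_sig ups_mu ups_rho_r ups_rho_l)
  next
  case (r_vinv2 g)
  have "g \<in> Mor G"
    using wl unfolding r_vinv2 by (auto simp: gs[OF gG] sig_def split: if_splits)
  then show ?thesis unfolding r_vinv2 using hr_ax.r_vinv2[where G=G' and g="Fm g"]
    by (simp add: fsimps ups_sig ups_mu ups_rho_r ups_rho_l)
  next
  case (r_epsv g)
  have "g \<in> Mor G"
    using wl unfolding r_epsv by (auto simp: gs[OF gG] sig_def split: if_splits)
  then show ?thesis unfolding r_epsv using hr_ax.r_epsv[where G=G' and g="Fm g"]
    by (simp add: fsimps ups_sig ups_mu ups_rho_r ups_rho_l)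
  next
  case (r_vL g)
  have "g \<in> Mor G"
    using wl unfolding r_vL by (auto simp: gs[OF gG] sig_def split: if_splits)
  then show ?thesis unfolding r_vL using hr_ax.r_vL[where G=G' and g="Fm g"]
    by (simp add: fsimps ups_sig ups_mu ups_rho_r ups_rho_l)
  next
  case (r_Sv g)
  have "g \<in> Mor G"
    using wl unfolding r_Sv by (auto simp: gs[OF gG] sig_def split: if_splits)
  then show ?thesis unfolding r_Sv using hr_ax.r_Sv[where G=G' and g="Fm g"]
    by (simp add: fsimps ups_sig ups_mu ups_rho_r ups_rho_l)
  next
  case (r_mv1 g h)
  have "g \<in> Mor G \<and> h \<in> Mor G \<and> cod G g = groupoid.dom G h"
    using wl unfolding r_mv1 by (auto simp: gs[OF gG] sig_def split: if_splits)
  then show ?thesis unfolding r_mv1 using hr_ax.r_mv1[where G=G' and g="Fm g" and h="Fm h"]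
    by (simp add: fsimps ups_sig ups_mu ups_rho_r ups_rho_l)
  next
  case (r_mv2 g h)
  have "g \<in> Mor G \<and> h \<in> Mor G \<and> cod G g = groupoid.dom G h"
    using wl unfolding r_mv2 by (auto simp: gs[OF gG] sig_def split: if_splits)
  then show ?thesis unfolding r_mv2 using hr_ax.r_mv2[where G=G' and g="Fm g" and h="Fm h"]
    by (simp add: fsimps ups_sig ups_mu ups_rho_r ups_rho_l)
  next
  case (r_cop1 i j)
  have "i \<in> Obj G \<and> j \<in> Obj G"
    using wl unfolding r_cop1 by (auto simp: gs[OF gG] sig_def split: if_splits)
  then show ?thesis unfolding r_cop1 using hr_ax.r_cop1[where G=G' and i="Fo i" and j="Fo j"]
    by (simp add: fsimps ups_sig ups_mu ups_rho_r ups_rho_l)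
  next
  case (r_cop2 i j)
  have "i \<in> Obj G \<and> j \<in> Obj G"
    using wl unfolding r_cop2 by (auto simp: gs[OF gG] sig_def split: if_splits)
  then show ?thesis unfolding r_cop2 using hr_ax.r_cop2[where G=G' and i="Fo i" and j="Fo j"]
    by (simp add: fsimps ups_sig ups_mu ups_rho_r ups_rho_l)
  next
  case (r_cop3 i j)
  have "i \<in> Obj G \<and> j \<in> Obj G"
    using wl unfolding r_cop3 by (auto simp: gs[OF gG] sig_def split: if_splits)
  then show ?thesis unfolding r_cop3 using hr_ax.r_cop3[where G=G' and i="Fo i" and j="Fo j"]
    by (simp add: fsimps ups_sig ups_mu ups_rho_r ups_rho_l)
  next
  case (r_cop4 i j)
  have "i \<in> Obj G \<and> j \<in> Obj G"
    using wl unfolding r_cop4 by (auto simp: gs[OF gG] sig_def split: if_splits)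
  then show ?thesis unfolding r_cop4 using hr_ax.r_cop4[where G=G' and i="Fo i" and j="Fo j"]
    by (simp add: fsimps ups_sig ups_mu ups_rho_r ups_rho_l)
  next
  case (r_twist g)
  have "g \<in> Mor G"
    using wl unfolding r_twist by (auto simp: gs[OF gG] sig_def split: if_splits)
  then show ?thesis unfolding r_twist using hr_ax.r_twist[where G=G' and g="Fm g"]
    by (simp add: fsimps ups_sig ups_mu ups_rho_r ups_rho_l)
  next
  case (r_braid h g)
  have "g \<in> Mor G \<and> h \<in> Mor G"
    using wl unfolding r_braid by (auto simp: gs[OF gG] sig_def split: if_splits)
  then show ?thesis unfolding r_braid using hr_ax.r_braid[where G=G' and h="Fm h" and g="Fm g"]
    by (simp add: fsimps ups_sig ups_mu ups_rho_r ups_rho_l)qed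

lemma ups_hreq: "hreq G t u \<Longrightarrow> hreq G' (map_tm Fo Fm t) (map_tm Fo Fm u)"
proof (induction rule: hreq.induct)
  case (ax l r)
  then show ?case using ups_ax[OF ax(1-3)] ups_wf[of l] ups_wf[of r] by (auto intro: hreq.ax)
next
  case (refl t)
  then show ?case using ups_wf[of t] by (auto intro: hreq.refl)
next
  case (sym t u)
  then show ?case by (auto intro: hreq.sym)
next
  case (trans t u w)
  then show ?case by (auto intro: hreq.trans)
next
  case (comp_cong f f' g g')
  then show ?case using ups_wf[of "f \<odot> g"] by (auto intro: hreq.comp_cong)
next
  case (tens_cong f f' g g')
  then show ?case by (auto intro: hreq.tens_cong)
qed
end
end

lemmas [trans] = hreq.trans

lemma hq_wf: "hreq G t u \<Longrightarrow> wf G t \<and> wf G u \<and> src G t = src G u \<and> trg G t = trg G u"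
  by (induction rule: hreq.induct) auto

lemma hq_comp: "hreq G f f' \<Longrightarrow> hreq G g g' \<Longrightarrow> trg G g = src G f \<Longrightarrow> hreq G (f \<odot> g) (f' \<odot> g')"
  using hq_wf[of G f f'] hq_wf[of G g g'] by (auto intro: hreq.comp_cong)

lemma hq_compl: "hreq G f f' \<Longrightarrow> wf G g \<Longrightarrow> trg G g = src G f \<Longrightarrow> hreq G (f \<odot> g) (f' \<odot> g)"
  using hq_comp hreq.refl by metis
lemma hq_compr: "wf G f \<Longrightarrow> hreq G g g' \<Longrightarrow> trg G g = src G f \<Longrightarrow> hreq G (f \<odot> g) (f \<odot> g')"
  using hq_comp hreq.refl by metis
lemma hq_tensl: "hreq G f f' \<Longrightarrow> wf G g \<Longrightarrow> hreq G (f \<diamond> g) (f' \<diamond> g)"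
  using hreq.tens_cong hreq.refl by metis
lemma hq_tensr: "wf G f \<Longrightarrow> hreq G g g' \<Longrightarrow> hreq G (f \<diamond> g) (f \<diamond> g')"
  using hreq.tens_cong hreq.refl by metis

lemma hq_ax: "(l, r) \<in> hr_ax G \<Longrightarrow> wf G l \<Longrightarrow> wf G r \<Longrightarrow> src G l = src G r \<Longrightarrow> trg G l = trg G r \<Longrightarrow> hreq G l r"
  by (rule hreq.ax)

lemma hq_idl: "wf G f \<Longrightarrow> set A \<subseteq> Mor G \<Longrightarrow> trg G f = A \<Longrightarrow> hreq G (Id A \<odot> f) f"
  by (rule hq_ax[OF hr_ax.c_idl]) auto
lemma hq_idr: "wf G f \<Longrightarrow> set A \<subseteq> Mor G \<Longrightarrow> src G f = A \<Longrightarrow> hreq G (f \<odot> Id A) f"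
  by (rule hq_ax[OF hr_ax.c_idr]) auto
lemma hq_tl: "wf G f \<Longrightarrow> hreq G (Id [] \<diamond> f) f"
  by (rule hq_ax[OF hr_ax.t_unitl]) auto
lemma hq_tr: "wf G f \<Longrightarrow> hreq G (f \<diamond> Id []) f"
  by (rule hq_ax[OF hr_ax.t_unitr]) auto
lemma hq_assoc: "wf G f \<Longrightarrow> wf G g \<Longrightarrow> wf G h \<Longrightarrow> trg G h = src G g \<Longrightarrow> trg G g = src G f \<Longrightarrow>
   hreq G ((f \<odot> g) \<odot> h) (f \<odot> (g \<odot> h))"
  by (rule hq_ax[OF hr_ax.c_assoc]) auto
lemma hq_inter: "wf G f \<Longrightarrow> wf G g \<Longrightarrow> wf G f' \<Longrightarrow> wf G g' \<Longrightarrow> trg G g = src G f \<Longrightarrow> trg G g' = src G f' \<Longrightarrow>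
   hreq G ((f \<odot> g) \<diamond> (f' \<odot> g')) ((f \<diamond> f') \<odot> (g \<diamond> g'))"
  by (rule hq_ax[OF hr_ax.t_interchange]) auto
lemma hq_tid: "set A \<subseteq> Mor G \<Longrightarrow> set B \<subseteq> Mor G \<Longrightarrow> hreq G (Id A \<diamond> Id B) (Id (A @ B))"
  by (rule hq_ax[OF hr_ax.t_id]) auto

lemma hq_BrA0: fixes G :: "('o,'m) groupoid" and A :: "'m list" assumes A: "set A \<subseteq> Mor G" shows "hreq G (Br A []) (Id A)"
proof -
  let ?X = "Br A [] :: ('o,'m) tm"
  have wX: "wf G ?X" using A by simp
  have h1: "hreq G ?X ((Id [] \<diamond> ?X) \<odot> (?X \<diamond> Id []))"
    using hq_ax[OF hr_ax.b_hex1[where G=G and A=A and B="[]" and C="[]"]] A by simp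
  have h2: "hreq G ((Id [] \<diamond> ?X) \<odot> (?X \<diamond> Id [])) (?X \<odot> ?X)"
    using hq_comp[OF hq_tl[OF wX] hq_tr[OF wX]] by simp
  have inv: "hreq G (BrInv A [] \<odot> ?X) (Id A)"
    using hq_ax[OF hr_ax.b_inv1[where G=G and A=A and B="[]"]] A by simp
  have wI: "wf G (BrInv A [])" using A by simp
  have "hreq G (Id A) (BrInv A [] \<odot> ?X)" using inv by (rule hreq.sym)
  also have "hreq G (BrInv A [] \<odot> ?X) (BrInv A [] \<odot> (?X \<odot> ?X))"
    using hq_compr[OF wI hreq.trans[OF h1 h2]] by simp
  also have "hreq G (BrInv A [] \<odot> (?X \<odot> ?X)) ((BrInv A [] \<odot> ?X) \<odot> ?X)"
    using hreq.sym[OF hq_assoc[OF wI wX wX]] by simp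
  also have "hreq G ((BrInv A [] \<odot> ?X) \<odot> ?X) (Id A \<odot> ?X)"
    using hq_compl[OF inv wX] by simp
  also have "hreq G (Id A \<odot> ?X) ?X" using hq_idl[OF wX A] by simp
  finally show ?thesis by (rule hreq.sym)
qed

lemma hq_Br0A: fixes G :: "('o,'m) groupoid" and A :: "'m list" assumes A: "set A \<subseteq> Mor G" shows "hreq G (Br [] A) (Id A)"
proof -
  let ?X = "Br [] A :: ('o,'m) tm"
  have wX: "wf G ?X" using A by simp
  have h1: "hreq G ?X ((?X \<diamond> Id []) \<odot> (Id [] \<diamond> ?X))"
    using hq_ax[OF hr_ax.b_hex2[where G=G and A="[]" and B="[]" and C=A]] A by simp
  have h2: "hreq G ((?X \<diamond> Id []) \<odot> (Id [] \<diamond> ?X)) (?X \<odot> ?X)"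
    using hq_comp[OF hq_tr[OF wX] hq_tl[OF wX]] by simp
  have inv: "hreq G (BrInv [] A \<odot> ?X) (Id A)"
    using hq_ax[OF hr_ax.b_inv1[where G=G and A="[]" and B=A]] A by simp
  have wI: "wf G (BrInv [] A)" using A by simp
  have "hreq G (Id A) (BrInv [] A \<odot> ?X)" using inv by (rule hreq.sym)
  also have "hreq G (BrInv [] A \<odot> ?X) (BrInv [] A \<odot> (?X \<odot> ?X))"
    using hq_compr[OF wI hreq.trans[OF h1 h2]] by simp
  also have "hreq G (BrInv [] A \<odot> (?X \<odot> ?X)) ((BrInv [] A \<odot> ?X) \<odot> ?X)"
    using hreq.sym[OF hq_assoc[OF wI wX wX]] by simp
  also have "hreq G ((BrInv [] A \<odot> ?X) \<odot> ?X) (Id A \<odot> ?X)"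
    using hq_compl[OF inv wX] by simp
  also have "hreq G (Id A \<odot> ?X) ?X" using hq_idl[OF wX A] by simp
  finally show ?thesis by (rule hreq.sym)
qed

lemma hq_BrInvA0: fixes G :: "('o,'m) groupoid" and A :: "'m list" assumes A: "set A \<subseteq> Mor G" shows "hreq G (BrInv A []) (Id A)"
proof -
  have wI: "wf G (BrInv A [])" using A by simp
  have "hreq G (BrInv A []) (Id A \<odot> BrInv A [])" using hreq.sym[OF hq_idl[OF wI A]] by simp
  also have "hreq G (Id A \<odot> BrInv A []) (Br A [] \<odot> BrInv A [])"
    using hq_compl[OF hreq.sym[OF hq_BrA0[OF A]] wI] by simp
  also have "hreq G (Br A [] \<odot> BrInv A []) (Id A)"
    using hq_ax[OF hr_ax.b_inv2[where G=G and A=A and B="[]"]] A by simp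
  finally show ?thesis .
qed

lemma hq_BrInv0A: fixes G :: "('o,'m) groupoid" and A :: "'m list" assumes A: "set A \<subseteq> Mor G" shows "hreq G (BrInv [] A) (Id A)"
proof -
  have wI: "wf G (BrInv [] A)" using A by simp
  have "hreq G (BrInv [] A) (BrInv [] A \<odot> Id A)" using hreq.sym[OF hq_idr[OF wI A]] by simp
  also have "hreq G (BrInv [] A \<odot> Id A) (BrInv [] A \<odot> Br [] A)"
    using hq_compr[OF wI hreq.sym[OF hq_Br0A[OF A]]] by simp
  also have "hreq G (BrInv [] A \<odot> Br [] A) (Id A)"
    using hq_ax[OF hr_ax.b_inv1[where G=G and A="[]" and B=A]] A by simp
  finally show ?thesis .
qed

fun isId :: "('o,'m) tm \<Rightarrow> bool" where
  "isId (Id A) = True" | "isId _ = False"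
fun idl :: "('o,'m) tm \<Rightarrow> 'm list" where
  "idl (Id A) = A" | "idl _ = []"

fun strip :: "('o,'m) tm \<Rightarrow> ('o,'m) tm" where
  "strip (f \<odot> g) = (let a = strip f; b = strip g in if isId a then b else if isId b then a else a \<odot> b)"
| "strip (f \<diamond> g) = (let a = strip f; b = strip g in if isId a \<and> isId b then Id (idl a @ idl b)
     else if a = Id [] then b else if b = Id [] then a else a \<diamond> b)"
| "strip (Br A B) = (if A = [] then Id B else if B = [] then Id A else Br A B)"
| "strip (BrInv A B) = (if A = [] then Id B else if B = [] then Id A else BrInv A B)"
| "strip t = t"

lemma isId_E: "isId a \<Longrightarrow> a = Id (idl a)" by (cases a) auto

lemma strip_ok: "wf G t \<Longrightarrow> hreq G t (strip t)"
proof (induction t)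
  case (Comp f g)
  define a where "a = strip f"
  define b where "b = strip g"
  have ha: "hreq G f a" and hb: "hreq G g b" using Comp a_def b_def by auto
  have wa: "wf G a" "src G a = src G f" "trg G a = trg G f" using hq_wf[OF ha] by auto
  have wb: "wf G b" "src G b = src G g" "trg G b = trg G g" using hq_wf[OF hb] by auto
  have m: "trg G g = src G f" using Comp by simp
  have h0: "hreq G (f \<odot> g) (a \<odot> b)" using hq_comp[OF ha hb m] .
  show ?case
  proof (cases "isId a")
    case True
    then have "a = Id (idl a)" by (rule isId_E)
    moreover have "idl a = trg G b" using wa wb m by (subst (asm) \<open>a = Id (idl a)\<close>) (metis \<open>a = Id (idl a)\<close> src.simps(1))
    ultimately have "hreq G (a \<odot> b) b" using hq_idl[OF wb(1)] wa(1) by (metis wf.simps(1))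
    then show ?thesis using h0 True by (simp add: a_def[symmetric] b_def[symmetric] Let_def) (rule hreq.trans)
  next
    case False
    note F = False
    show ?thesis
    proof (cases "isId b")
      case True
      then have "b = Id (idl b)" by (rule isId_E)
      moreover have "idl b = src G a" using wa wb m by (metis \<open>b = Id (idl b)\<close> trg.simps(1))
      ultimately have "hreq G (a \<odot> b) a" using hq_idr[OF wa(1)] wb(1) by (metis wf.simps(1))
      then show ?thesis using h0 True F by (simp add: a_def[symmetric] b_def[symmetric] Let_def) (rule hreq.trans)
    next
      case False
      then show ?thesis using h0 F by (simp add: a_def[symmetric] b_def[symmetric] Let_def)
    qed
  qed
next
  case (Tens f g)
  define a where "a = strip f"
  define b where "b = strip g"
  have ha: "hreq G f a" and hb: "hreq G g b" using Tens a_def b_def by auto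
  have wa: "wf G a" using hq_wf[OF ha] by auto
  have wb: "wf G b" using hq_wf[OF hb] by auto
  have h0: "hreq G (f \<diamond> g) (a \<diamond> b)" using hreq.tens_cong[OF ha hb] .
  show ?case
  proof (cases "isId a \<and> isId b")
    case True
    then have "a = Id (idl a)" "b = Id (idl b)" by (auto intro: isId_E)
    then have "hreq G (a \<diamond> b) (Id (idl a @ idl b))" using hq_tid[of "idl a" G "idl b"] wa wb by (metis wf.simps(1))
    then show ?thesis using h0 True by (simp add: a_def[symmetric] b_def[symmetric] Let_def) (rule hreq.trans)
  next
    case F: False
    show ?thesis
    proof (cases "a = Id []")
      case True
      then have "hreq G (a \<diamond> b) b" using hq_tl[OF wb] by simp
      then show ?thesis using h0 True F by (simp add: a_def[symmetric] b_def[symmetric] Let_def) (rule hreq.trans)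
    next
      case F2: False
      show ?thesis
      proof (cases "b = Id []")
        case True
        then have "hreq G (a \<diamond> b) a" using hq_tr[OF wa] by simp
        then show ?thesis using h0 True F F2 by (simp add: a_def[symmetric] b_def[symmetric] Let_def) (rule hreq.trans)
      next
        case False
        then show ?thesis using h0 F F2 by (auto simp add: a_def[symmetric] b_def[symmetric] Let_def)
      qed
    qed
  qed
next
  case (Br A B)
  then show ?case using hq_Br0A[of B G] hq_BrA0[of A G] by (auto intro: hreq.refl)
next
  case (BrInv A B)
  then show ?case using hq_BrInv0A[of B G] hq_BrInvA0[of A G] by (auto intro: hreq.refl)
qed (auto intro: hreq.refl)

locale emb =
  fixes G :: "('o,'m) groupoid" and G' :: "('p,'n) groupoid" and Fo :: "'o \<Rightarrow> 'p" and Fm :: "'m \<Rightarrow> 'n"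
  assumes gG: "is_groupoid G" and gG': "is_groupoid G'" and fnc: "is_functor G G' Fo Fm"
    and injO: "inj_on Fo (Obj G)" and injM: "inj_on Fm (Mor G)"
begin

definition "KO = Fo ` Obj G"
definition "K = Fm ` Mor G"
definition "psio = inv_into (Obj G) Fo"
definition "psi = inv_into (Mor G) Fm"
definition "Fs = {n \<in> Mor G'. groupoid.dom G' n \<notin> KO \<and> cod G' n \<notin> KO}"
definition "isT n \<longleftrightarrow> n \<notin> K \<and> n \<notin> Fs"
definition "hasT A \<longleftrightarrow> (\<exists>a\<in>set A. isT a)"
definition "Rl A = map psi (filter (\<lambda>n. n \<in> K) A)"

primrec Rr :: "('p,'n) tm \<Rightarrow> ('o,'m) tm" where
  "Rr (Id A) = Id (Rl A)"
| "Rr (f \<odot> g) = Rr f \<odot> Rr g"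
| "Rr (f \<diamond> g) = Rr f \<diamond> Rr g"
| "Rr (Br A B) = Br (Rl A) (Rl B)"
| "Rr (BrInv A B) = BrInv (Rl A) (Rl B)"
| "Rr (Delta g) = (if g \<in> K then Delta (psi g) else Id [])"
| "Rr (Eps g) = (if g \<in> K then Eps (psi g) else Id [])"
| "Rr (Mult g h) = (if g \<in> K \<and> h \<in> K then Mult (psi g) (psi h) else Id [])"
| "Rr (Eta i) = (if i \<in> KO then Eta (psio i) else Id [])"
| "Rr (S g) = (if g \<in> K then S (psi g) else Id [])"
| "Rr (Sbar g) = (if g \<in> K then Sbar (psi g) else Id [])"
| "Rr (Lsm i) = (if i \<in> KO then Lsm (psio i) else Id [])"
| "Rr (Lbig g) = (if g \<in> K then Lbig (psi g) else Id [])"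
| "Rr (V g) = (if g \<in> K then V (psi g) else Id [])"
| "Rr (Vinv g) = (if g \<in> K then Vinv (psi g) else Id [])"

fun zr :: "('p,'n) tm \<Rightarrow> bool" where
  "zr (f \<odot> g) = (zr f \<or> zr g)"
| "zr (f \<diamond> g) = (zr f \<or> zr g)"
| "zr t = (hasT (src G' t) \<or> hasT (trg G' t))"

lemmas gs' = gs[OF gG']
lemmas gsG = gs[OF gG]

lemma psio_Fo[simp]: "i \<in> Obj G \<Longrightarrow> psio (Fo i) = i"
  unfolding psio_def using injO by (simp add: inv_into_f_f)
lemma psi_Fm[simp]: "g \<in> Mor G \<Longrightarrow> psi (Fm g) = g"
  unfolding psi_def using injM by (simp add: inv_into_f_f)
lemma K_E: "n \<in> K \<Longrightarrow> \<exists>a \<in> Mor G. n = Fm a" unfolding K_def by auto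
lemma KO_E: "i \<in> KO \<Longrightarrow> \<exists>a \<in> Obj G. i = Fo a" unfolding KO_def by auto
lemma Fm_K[simp]: "g \<in> Mor G \<Longrightarrow> Fm g \<in> K" unfolding K_def by auto
lemma Fo_KO[simp]: "i \<in> Obj G \<Longrightarrow> Fo i \<in> KO" unfolding KO_def by auto

lemma psi_mor[simp]: "n \<in> K \<Longrightarrow> psi n \<in> Mor G" using K_E psi_Fm by metis
lemma Fm_psi[simp]: "n \<in> K \<Longrightarrow> Fm (psi n) = n" using K_E psi_Fm by metis
lemma psio_obj[simp]: "i \<in> KO \<Longrightarrow> psio i \<in> Obj G" using KO_E psio_Fo by metis
lemma Fo_psio[simp]: "i \<in> KO \<Longrightarrow> Fo (psio i) = i" using KO_E psio_Fo by metis

lemmas fmor = fs_mor[OF gG gG' fnc] and fdom = fs_dom[OF gG gG' fnc] and fcod = fs_cod[OF gG gG' fnc]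
  and fcomp = f_comp[OF gG gG' fnc] and fid = f_id[OF gG gG' fnc] and finv = f_inv[OF gG gG' fnc]
  and fobj = f_obj[OF gG gG' fnc]

lemma K_mor[simp]: "n \<in> K \<Longrightarrow> n \<in> Mor G'"
  by (metis K_E fmor)
lemma KO_obj[simp]: "i \<in> KO \<Longrightarrow> i \<in> Obj G'"
  by (metis KO_E fobj)
lemma K_dom[simp]: "n \<in> K \<Longrightarrow> groupoid.dom G' n \<in> KO"
proof -
  assume "n \<in> K" then obtain a where "a \<in> Mor G" "n = Fm a" using K_E by blast
  then show ?thesis by (simp add: fdom gsG)
qed
lemma K_cod[simp]: "n \<in> K \<Longrightarrow> cod G' n \<in> KO"
proof -
  assume "n \<in> K" then obtain a where "a \<in> Mor G" "n = Fm a" using K_E by blast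
  then show ?thesis by (simp add: fcod gsG)
qed
lemma psi_dom[simp]: "n \<in> K \<Longrightarrow> groupoid.dom G (psi n) = psio (groupoid.dom G' n)"
proof -
  assume "n \<in> K" then obtain a where "a \<in> Mor G" "n = Fm a" using K_E by blast
  then show ?thesis by (simp add: fdom gsG)
qed
lemma psi_cod[simp]: "n \<in> K \<Longrightarrow> cod G (psi n) = psio (cod G' n)"
proof -
  assume "n \<in> K" then obtain a where "a \<in> Mor G" "n = Fm a" using K_E by blast
  then show ?thesis by (simp add: fcod gsG)
qed
lemma psio_inj: "i \<in> KO \<Longrightarrow> j \<in> KO \<Longrightarrow> psio i = psio j \<longleftrightarrow> i = j"
  by (metis Fo_psio)
lemma K_id[simp]: "i \<in> KO \<Longrightarrow> idm G' i \<in> K"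
proof -
  assume "i \<in> KO" then obtain a where "a \<in> Obj G" "i = Fo a" using KO_E by blast
  then show ?thesis by (metis Fm_K fid gsG)
qed
lemma psi_id[simp]: "i \<in> KO \<Longrightarrow> psi (idm G' i) = idm G (psio i)"
proof -
  assume "i \<in> KO" then obtain a where "a \<in> Obj G" "i = Fo a" using KO_E by blast
  then show ?thesis by (metis psi_Fm psio_Fo fid gsG)
qed
lemma K_comp[simp]: "g \<in> K \<Longrightarrow> h \<in> K \<Longrightarrow> cod G' g = groupoid.dom G' h \<Longrightarrow> groupoid.comp G' g h \<in> K"
proof -
  assume a: "g \<in> K" "h \<in> K" "cod G' g = groupoid.dom G' h"
  then have c: "cod G (psi g) = groupoid.dom G (psi h)" by simp
  then have "Fm (groupoid.comp G (psi g) (psi h)) = groupoid.comp G' g h" using a fcomp by simp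
  moreover have "groupoid.comp G (psi g) (psi h) \<in> Mor G" using a c gsG by simp
  ultimately show ?thesis using Fm_K by metis
qed
lemma psi_comp[simp]: "g \<in> K \<Longrightarrow> h \<in> K \<Longrightarrow> cod G' g = groupoid.dom G' h \<Longrightarrow>
   psi (groupoid.comp G' g h) = groupoid.comp G (psi g) (psi h)"
proof -
  assume a: "g \<in> K" "h \<in> K" "cod G' g = groupoid.dom G' h"
  then have c: "cod G (psi g) = groupoid.dom G (psi h)" by simp
  then have "Fm (groupoid.comp G (psi g) (psi h)) = groupoid.comp G' g h" using a fcomp by simp
  moreover have "groupoid.comp G (psi g) (psi h) \<in> Mor G" using a c gsG by simp
  ultimately show ?thesis using psi_Fm by metis
qed
lemma K_inv[simp]: "g \<in> K \<Longrightarrow> groupoid.inv G' g \<in> K"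
proof -
  assume "g \<in> K" then obtain a where "a \<in> Mor G" "g = Fm a" using K_E by blast
  then show ?thesis by (metis Fm_K finv gsG)
qed
lemma psi_inv[simp]: "g \<in> K \<Longrightarrow> psi (groupoid.inv G' g) = groupoid.inv G (psi g)"
proof -
  assume "g \<in> K" then obtain a where "a \<in> Mor G" "g = Fm a" using K_E by blast
  then show ?thesis by (metis psi_Fm finv gsG)
qed

lemma F_mor: "n \<in> Fs \<Longrightarrow> n \<in> Mor G'" unfolding Fs_def by auto
lemma F_notK[simp]: "n \<in> Fs \<Longrightarrow> n \<notin> K" unfolding Fs_def using K_dom by blast
lemma F_dom: "n \<in> Fs \<Longrightarrow> groupoid.dom G' n \<notin> KO" unfolding Fs_def by auto
lemma F_cod: "n \<in> Fs \<Longrightarrow> cod G' n \<notin> KO" unfolding Fs_def by auto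
lemma F_id[simp]: "i \<in> Obj G' \<Longrightarrow> i \<notin> KO \<Longrightarrow> idm G' i \<in> Fs" unfolding Fs_def using gs' by auto
lemma notK_id[simp]: "i \<in> Obj G' \<Longrightarrow> i \<notin> KO \<Longrightarrow> idm G' i \<notin> K" using F_id F_notK by blast
lemma F_comp[simp]: "g \<in> Fs \<Longrightarrow> h \<in> Fs \<Longrightarrow> cod G' g = groupoid.dom G' h \<Longrightarrow> groupoid.comp G' g h \<in> Fs"
  unfolding Fs_def using gs' by auto
lemma F_inv[simp]: "g \<in> Fs \<Longrightarrow> groupoid.inv G' g \<in> Fs"
  unfolding Fs_def using gs' by auto
lemma KF_comp1: "g \<in> K \<Longrightarrow> h \<in> Fs \<Longrightarrow> cod G' g = groupoid.dom G' h \<Longrightarrow> False"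
  using K_cod F_dom by metis
lemma KF_comp2: "g \<in> Fs \<Longrightarrow> h \<in> K \<Longrightarrow> cod G' g = groupoid.dom G' h \<Longrightarrow> False"
  using K_dom F_cod by metis

lemma T_split: "isT g \<or> g \<in> K \<or> g \<in> Fs" unfolding isT_def by auto
lemma nT_K: "g \<in> K \<Longrightarrow> \<not> isT g" unfolding isT_def by auto
lemma nT_F: "g \<in> Fs \<Longrightarrow> \<not> isT g" unfolding isT_def by auto
lemma hasT_simps[simp]: "hasT [] = False" "hasT (a # A) = (isT a \<or> hasT A)" "hasT (A @ B) = (hasT A \<or> hasT B)"
  unfolding hasT_def by auto
lemma Rl_simps[simp]: "Rl [] = []" "Rl (a # A) = (if a \<in> K then psi a # Rl A else Rl A)" "Rl (A @ B) = Rl A @ Rl B"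
  unfolding Rl_def by auto
lemma Rl_mor: "set (Rl A) \<subseteq> Mor G" unfolding Rl_def by auto

lemma zr_intro: "hasT (src G' t) \<or> hasT (trg G' t) \<Longrightarrow> zr t"
  by (induction t) auto

lemma Rr_wf: "wf G' t \<Longrightarrow> \<not> zr t \<Longrightarrow> wf G (Rr t) \<and> src G (Rr t) = Rl (src G' t) \<and> trg G (Rr t) = Rl (trg G' t)"
proof (induction t)
  case (Mult g h)
  then show ?case using T_split[of g] T_split[of h] KF_comp1[of g h] KF_comp2[of g h]
    by (auto simp: nT_K nT_F isT_def gs')
qed (use T_split Rl_mor gs' in \<open>auto simp: isT_def\<close>)

lemma hasT_map_Fm: "set A \<subseteq> Mor G \<Longrightarrow> \<not> hasT (map Fm A)"
  unfolding hasT_def using nT_K by auto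
lemma Rl_map_Fm: "set A \<subseteq> Mor G \<Longrightarrow> Rl (map Fm A) = A"
  by (induction A) auto

lemmas upswf = ups_wf[OF gG gG' fnc]

lemma Rr_ups: "wf G t \<Longrightarrow> \<not> zr (map_tm Fo Fm t) \<and> Rr (map_tm Fo Fm t) = t"
proof (induction t)
  case (Comp f g) then show ?case by simp
next
  case (Tens f g) then show ?case by simp
qed (auto simp: hasT_map_Fm Rl_map_Fm nT_K fdom fcod fid finv gsG fmor isT_def fcomp[symmetric])

definition "GK = G'\<lparr>Obj := KO, Mor := K\<rparr>"
lemma GK_simps[simp]: "Obj GK = KO" "Mor GK = K" "groupoid.dom GK = groupoid.dom G'" "cod GK = cod G'"
  "groupoid.comp GK = groupoid.comp G'" "idm GK = idm G'" "groupoid.inv GK = groupoid.inv G'"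
  unfolding GK_def by simp_all

lemma GK_gpd: "is_groupoid GK"
proof -
  have a: "\<forall>g\<in>Mor G'. \<forall>h\<in>Mor G'. \<forall>k\<in>Mor G'. cod G' g = groupoid.dom G' h \<longrightarrow> cod G' h = groupoid.dom G' k \<longrightarrow>
        groupoid.comp G' (groupoid.comp G' g h) k = groupoid.comp G' g (groupoid.comp G' h k)"
   and b: "\<forall>g\<in>Mor G'. groupoid.comp G' (idm G' (groupoid.dom G' g)) g = g \<and> groupoid.comp G' g (idm G' (cod G' g)) = g"
   and c: "\<forall>g\<in>Mor G'. groupoid.inv G' g \<in> Mor G' \<and> groupoid.dom G' (groupoid.inv G' g) = cod G' g \<and> cod G' (groupoid.inv G' g) = groupoid.dom G' g \<and>
        groupoid.comp G' g (groupoid.inv G' g) = idm G' (groupoid.dom G' g) \<and> groupoid.comp G' (groupoid.inv G' g) g = idm G' (cod G' g)"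
    using gG' unfolding is_groupoid_def by blast+
  show ?thesis unfolding is_groupoid_def GK_simps
  proof (intro conjI ballI impI)
  qed (use a b c gs' in auto)
qed

lemma GK_fun: "is_functor GK G psio psi"
  unfolding is_functor_def GK_simps by simp

lemma GK_inj: "inj_on psio (Obj GK)" by (metis inj_onI Fo_psio GK_simps(1))

definition "labK t \<longleftrightarrow> set1_tm t \<subseteq> KO \<and> set2_tm t \<subseteq> K"
definition "labF t \<longleftrightarrow> set1_tm t \<subseteq> Obj G' - KO \<and> set2_tm t \<subseteq> Fs"

lemma src_GK[simp]: "src GK t = src G' t" by (induction t) auto
lemma trg_GK[simp]: "trg GK t = trg G' t" by (induction t) auto
lemma wf_GK: "wf G' t \<Longrightarrow> labK t \<Longrightarrow> wf GK t"
  unfolding labK_def by (induction t) auto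
lemma sig_GK[simp]: "sig GK i j = sig G' i j" unfolding sig_def by simp
lemma mu_GK[simp]: "mu GK g h = mu G' g h" unfolding mu_def by simp
lemma rho_r_GK[simp]: "rho_r GK g k = rho_r G' g k" unfolding rho_r_def by simp
lemma rho_l_GK[simp]: "rho_l GK g k = rho_l G' g k" unfolding rho_l_def by simp

lemmas GK_intros = hr_ax.intros[where G=GK, simplified]

lemma hr_ax_GK: "(l, r) \<in> hr_ax G' \<Longrightarrow> (l, r) \<in> hr_ax GK"
  by (erule hr_ax.cases) (simp_all add: GK_intros)

lemma Rr_K: "labK t \<Longrightarrow> Rr t = map_tm psio psi t"
  unfolding labK_def by (induction t) (auto simp: Rl_def subset_iff intro!: filter_True)

lemma ups_psi: "labK t \<Longrightarrow> map_tm Fo Fm (map_tm psio psi t) = t"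
  unfolding labK_def by (induction t) (auto simp: subset_iff intro!: map_idI)

lemma K_case:
  assumes ax: "(l, r) \<in> hr_ax G'" and wl: "wf G' l" and wr: "wf G' r"
    and s: "src G' l = src G' r" and t: "trg G' l = trg G' r" and lK: "labK l" and rK: "labK r"
  shows "\<not> zr l \<and> \<not> zr r \<and> hreq G (Rr l) (Rr r)"
proof -
  have a: "(l, r) \<in> hr_ax GK" using hr_ax_GK[OF ax] .
  have wl': "wf GK l" using wf_GK[OF wl lK] .
  have wr': "wf GK r" using wf_GK[OF wr rK] .
  have ax0: "(map_tm psio psi l, map_tm psio psi r) \<in> hr_ax G"
    using ups_ax[OF GK_gpd gG GK_fun GK_inj a wl' wr'] .
  have u1: "wf G (map_tm psio psi l) \<and> src G (map_tm psio psi l) = map psi (src G' l) \<and> trg G (map_tm psio psi l) = map psi (trg G' l)"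
    using ups_wf[OF GK_gpd gG GK_fun wl'] by simp
  have u2: "wf G (map_tm psio psi r) \<and> src G (map_tm psio psi r) = map psi (src G' r) \<and> trg G (map_tm psio psi r) = map psi (trg G' r)"
    using ups_wf[OF GK_gpd gG GK_fun wr'] by simp
  have h: "hreq G (map_tm psio psi l) (map_tm psio psi r)"
    using hreq.ax[OF ax0] u1 u2 s t by simp
  have z1: "\<not> zr l" using Rr_ups[of "map_tm psio psi l"] u1 ups_psi[OF lK] by simp
  have z2: "\<not> zr r" using Rr_ups[of "map_tm psio psi r"] u2 ups_psi[OF rK] by simp
  show ?thesis using z1 z2 h Rr_K[OF lK] Rr_K[OF rK] by simp
qed

lemma F_srctrg: "wf G' t \<Longrightarrow> labF t \<Longrightarrow> set (src G' t) \<subseteq> Fs \<and> set (trg G' t) \<subseteq> Fs"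
  unfolding labF_def by (induction t) (auto simp: F_mor)

lemma F_case: "wf G' t \<Longrightarrow> labF t \<Longrightarrow> \<not> zr t \<and> hreq G (Rr t) (Id [])"
proof (induction t)
  case (Comp f g)
  have lf: "labF f" "labF g" using Comp.prems unfolding labF_def by auto
  have h1: "hreq G (Rr f) (Id [])" "hreq G (Rr g) (Id [])" "\<not> zr f" "\<not> zr g" using Comp lf by auto
  have "trg G (Rr g) = src G (Rr f)" using hq_wf[OF h1(1)] hq_wf[OF h1(2)] by simp
  then have "hreq G (Rr f \<odot> Rr g) (Id [] \<odot> Id [])" using hq_comp[OF h1(1) h1(2)] by simp
  also have "hreq G (Id [] \<odot> Id []) (Id [])" using hq_idl[of G "Id []" "[]"] by simp
  finally show ?case using h1 by simp
next
  case (Tens f g)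
  have lf: "labF f" "labF g" using Tens.prems unfolding labF_def by auto
  have h1: "hreq G (Rr f) (Id [])" "hreq G (Rr g) (Id [])" "\<not> zr f" "\<not> zr g" using Tens lf by auto
  have "hreq G (Rr f \<diamond> Rr g) (Id [] \<diamond> Id [])" using hreq.tens_cong[OF h1(1) h1(2)] .
  also have "hreq G (Id [] \<diamond> Id []) (Id [])" using hq_tl[of G "Id []"] by simp
  finally show ?case using h1 by simp
next
  case (Br A B)
  then have "Rl A = []" "Rl B = []" unfolding labF_def Rl_def by (auto simp: filter_empty_conv)
  then show ?case using Br F_srctrg[OF Br(1,2)] hq_BrA0[of "[]" G] by (auto simp: hasT_def nT_F)
next
  case (BrInv A B)
  then have "Rl A = []" "Rl B = []" unfolding labF_def Rl_def by (auto simp: filter_empty_conv)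
  then show ?case using BrInv F_srctrg[OF BrInv(1,2)] hq_BrInvA0[of "[]" G] by (auto simp: hasT_def nT_F)
next
  case (Id A)
  then have "Rl A = []" unfolding labF_def Rl_def by (auto simp: filter_empty_conv)
  then show ?case using Id F_srctrg[OF Id(1,2)] by (auto simp: hasT_def nT_F intro: hreq.refl)
qed (use F_srctrg in \<open>auto simp: hasT_def nT_F labF_def intro: hreq.refl\<close>)

end

context fixes G :: "('o,'m) groupoid" and k :: 'o
  assumes gpd: "is_groupoid G" and kO: "k \<in> Obj G"
begin

lemma e_mor[simp]: "idm G k \<in> Mor G" using gs[OF gpd] kO by simp
lemma e_dom[simp]: "groupoid.dom G (idm G k) = k" using gs[OF gpd] kO by simp
lemma e_cod[simp]: "cod G (idm G k) = k" using gs[OF gpd] kO by simp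
lemma e_inv[simp]: "groupoid.inv G (idm G k) = idm G k" using g_inv_idm[OF gpd kO] .
lemma e_comp[simp]: "groupoid.comp G (idm G k) (idm G k) = idm G k"
  using g_unit[OF gpd e_mor] by simp

abbreviation "e \<equiv> idm G k"
abbreviation "\<eta> \<equiv> (Eta k :: ('o,'m) tm)"

lemma D_unitl: "hreq G (Mult e e \<odot> (\<eta> \<diamond> ident e)) (ident e)"
  using hq_ax[OF hr_ax.h_unitl[where G=G and g="idm G k"]] kO by simp
lemma D_unitr: "hreq G (Mult e e \<odot> (ident e \<diamond> \<eta>)) (ident e)"
  using hq_ax[OF hr_ax.h_unitr[where G=G and g="idm G k"]] kO by simp
lemma D_deltaeta: "hreq G (Delta e \<odot> \<eta>) (\<eta> \<diamond> \<eta>)"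
  using hq_ax[OF hr_ax.h_deltaeta[where G=G and i=k]] kO by simp
lemma D_epseta: "hreq G (Eps e \<odot> \<eta>) (Id [])"
  using hq_ax[OF hr_ax.h_epseta[where G=G and i=k]] kO by simp
lemma D_antipl: "hreq G (Mult e e \<odot> (S e \<diamond> ident e) \<odot> Delta e) (\<eta> \<odot> Eps e)"
  using hq_ax[OF hr_ax.h_antipl[where G=G and g="idm G k"]] kO by simp

lemma D1: "hreq G (Mult e e \<odot> ((\<eta> \<diamond> ident e) \<odot> \<eta>)) \<eta>"
proof -
  have "hreq G (Mult e e \<odot> ((\<eta> \<diamond> ident e) \<odot> \<eta>)) ((Mult e e \<odot> (\<eta> \<diamond> ident e)) \<odot> \<eta>)"
    by (rule hreq.sym, rule hq_assoc) (simp_all add: kO)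
  also have "hreq G ((Mult e e \<odot> (\<eta> \<diamond> ident e)) \<odot> \<eta>) (ident e \<odot> \<eta>)"
    by (rule hq_compl[OF D_unitl]) (simp_all add: kO)
  also have "hreq G (ident e \<odot> \<eta>) \<eta>" by (rule hq_idl) (simp_all add: kO)
  finally show ?thesis .
qed

lemma D4: "hreq G (Mult e e \<odot> ((ident e \<diamond> \<eta>) \<odot> \<eta>)) \<eta>"
proof -
  have "hreq G (Mult e e \<odot> ((ident e \<diamond> \<eta>) \<odot> \<eta>)) ((Mult e e \<odot> (ident e \<diamond> \<eta>)) \<odot> \<eta>)"
    by (rule hreq.sym, rule hq_assoc) (simp_all add: kO)
  also have "hreq G ((Mult e e \<odot> (ident e \<diamond> \<eta>)) \<odot> \<eta>) (ident e \<odot> \<eta>)"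
    by (rule hq_compl[OF D_unitr]) (simp_all add: kO)
  also have "hreq G (ident e \<odot> \<eta>) \<eta>" by (rule hq_idl) (simp_all add: kO)
  finally show ?thesis .
qed

lemma D2: "hreq G (Delta e \<odot> \<eta>) ((ident e \<diamond> \<eta>) \<odot> \<eta>)"
proof -
  have "hreq G (Delta e \<odot> \<eta>) (\<eta> \<diamond> \<eta>)" by (rule D_deltaeta)
  also have "hreq G (\<eta> \<diamond> \<eta>) ((ident e \<odot> \<eta>) \<diamond> (\<eta> \<odot> Id []))"
    by (rule hreq.sym, rule hreq.tens_cong; rule hq_idl hq_idr) (simp_all add: kO)
  also have "hreq G ((ident e \<odot> \<eta>) \<diamond> (\<eta> \<odot> Id [])) ((ident e \<diamond> \<eta>) \<odot> (\<eta> \<diamond> Id []))"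
    by (rule hq_inter) (simp_all add: kO)
  also have "hreq G ((ident e \<diamond> \<eta>) \<odot> (\<eta> \<diamond> Id [])) ((ident e \<diamond> \<eta>) \<odot> \<eta>)"
    by (rule hq_compr, simp add: kO, rule hq_tr) (simp_all add: kO)
  finally show ?thesis .
qed

lemma D3: "hreq G (Delta e \<odot> \<eta>) ((\<eta> \<diamond> ident e) \<odot> \<eta>)"
proof -
  have "hreq G (Delta e \<odot> \<eta>) (\<eta> \<diamond> \<eta>)" by (rule D_deltaeta)
  also have "hreq G (\<eta> \<diamond> \<eta>) ((\<eta> \<odot> Id []) \<diamond> (ident e \<odot> \<eta>))"
    by (rule hreq.sym, rule hreq.tens_cong; rule hq_idl hq_idr) (simp_all add: kO)
  also have "hreq G ((\<eta> \<odot> Id []) \<diamond> (ident e \<odot> \<eta>)) ((\<eta> \<diamond> ident e) \<odot> (Id [] \<diamond> \<eta>))"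
    by (rule hq_inter) (simp_all add: kO)
  also have "hreq G ((\<eta> \<diamond> ident e) \<odot> (Id [] \<diamond> \<eta>)) ((\<eta> \<diamond> ident e) \<odot> \<eta>)"
    by (rule hq_compr, simp add: kO, rule hq_tl) (simp_all add: kO)
  finally show ?thesis .
qed

lemma D_Seta: "hreq G (S e \<odot> \<eta>) \<eta>"
proof -
  let ?s = "S e \<odot> \<eta>"
  have ws: "wf G ?s" by (simp add: kO)
  have "hreq G ?s (ident e \<odot> ?s)" by (rule hreq.sym, rule hq_idl) (simp_all add: kO)
  also have "hreq G (ident e \<odot> ?s) ((Mult e e \<odot> (ident e \<diamond> \<eta>)) \<odot> ?s)"
    by (rule hq_compl[OF hreq.sym[OF D_unitr]]) (simp_all add: kO)
  also have "hreq G ((Mult e e \<odot> (ident e \<diamond> \<eta>)) \<odot> ?s) (Mult e e \<odot> ((ident e \<diamond> \<eta>) \<odot> ?s))"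
    by (rule hq_assoc) (simp_all add: kO)
  also have "hreq G (Mult e e \<odot> ((ident e \<diamond> \<eta>) \<odot> ?s)) (Mult e e \<odot> ((ident e \<diamond> \<eta>) \<odot> (?s \<diamond> Id [])))"
    by (rule hq_compr, simp add: kO, rule hq_compr, simp add: kO, rule hreq.sym, rule hq_tr) (simp_all add: kO)
  also have "hreq G (Mult e e \<odot> ((ident e \<diamond> \<eta>) \<odot> (?s \<diamond> Id []))) (Mult e e \<odot> ((ident e \<odot> ?s) \<diamond> (\<eta> \<odot> Id [])))"
    by (rule hq_compr, simp add: kO, rule hreq.sym, rule hq_inter) (simp_all add: kO)
  also have "hreq G (Mult e e \<odot> ((ident e \<odot> ?s) \<diamond> (\<eta> \<odot> Id []))) (Mult e e \<odot> (?s \<diamond> \<eta>))"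
    by (rule hq_compr, simp add: kO, rule hreq.tens_cong[OF hq_idl hq_idr]) (simp_all add: kO)
  also have "hreq G (Mult e e \<odot> (?s \<diamond> \<eta>)) (Mult e e \<odot> ((S e \<odot> \<eta>) \<diamond> (ident e \<odot> \<eta>)))"
    by (rule hq_compr, simp add: kO, rule hq_tensr, simp add: kO, rule hreq.sym, rule hq_idl) (simp_all add: kO)
  also have "hreq G (Mult e e \<odot> ((S e \<odot> \<eta>) \<diamond> (ident e \<odot> \<eta>))) (Mult e e \<odot> ((S e \<diamond> ident e) \<odot> (\<eta> \<diamond> \<eta>)))"
    by (rule hq_compr, simp add: kO, rule hq_inter) (simp_all add: kO)
  also have "hreq G (Mult e e \<odot> ((S e \<diamond> ident e) \<odot> (\<eta> \<diamond> \<eta>))) (Mult e e \<odot> ((S e \<diamond> ident e) \<odot> (Delta e \<odot> \<eta>)))"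
    by (rule hq_compr, simp add: kO, rule hq_compr, simp add: kO, rule hreq.sym[OF D_deltaeta]) (simp_all add: kO)
  also have "hreq G (Mult e e \<odot> ((S e \<diamond> ident e) \<odot> (Delta e \<odot> \<eta>))) (Mult e e \<odot> (((S e \<diamond> ident e) \<odot> Delta e) \<odot> \<eta>))"
    by (rule hq_compr, simp add: kO, rule hreq.sym, rule hq_assoc) (simp_all add: kO)
  also have "hreq G (Mult e e \<odot> (((S e \<diamond> ident e) \<odot> Delta e) \<odot> \<eta>)) ((Mult e e \<odot> ((S e \<diamond> ident e) \<odot> Delta e)) \<odot> \<eta>)"
    by (rule hreq.sym, rule hq_assoc) (simp_all add: kO)
  also have "hreq G ((Mult e e \<odot> ((S e \<diamond> ident e) \<odot> Delta e)) \<odot> \<eta>) ((\<eta> \<odot> Eps e) \<odot> \<eta>)"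
    by (rule hq_compl[OF D_antipl]) (simp_all add: kO)
  also have "hreq G ((\<eta> \<odot> Eps e) \<odot> \<eta>) (\<eta> \<odot> (Eps e \<odot> \<eta>))"
    by (rule hq_assoc) (simp_all add: kO)
  also have "hreq G (\<eta> \<odot> (Eps e \<odot> \<eta>)) (\<eta> \<odot> Id [])"
    by (rule hq_compr[OF _ D_epseta]) (simp_all add: kO)
  also have "hreq G (\<eta> \<odot> Id []) \<eta>" by (rule hq_idr) (simp_all add: kO)
  finally show ?thesis .
qed

end

context fixes G :: "('o,'m) groupoid" and a :: 'm
  assumes gpd: "is_groupoid G" and aM: "a \<in> Mor G"
begin
lemma a_simps[simp]: "groupoid.dom G a \<in> Obj G" "cod G a \<in> Obj G"
  "idm G (groupoid.dom G a) \<in> Mor G" "idm G (cod G a) \<in> Mor G"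
  "groupoid.dom G (idm G (groupoid.dom G a)) = groupoid.dom G a"
  "cod G (idm G (groupoid.dom G a)) = groupoid.dom G a"
  "groupoid.dom G (idm G (cod G a)) = cod G a"
  "cod G (idm G (cod G a)) = cod G a"
  "groupoid.comp G a (idm G (cod G a)) = a"
  "groupoid.comp G (idm G (groupoid.dom G a)) a = a"
  "groupoid.inv G (idm G (groupoid.dom G a)) = idm G (groupoid.dom G a)"
  "groupoid.inv G (idm G (cod G a)) = idm G (cod G a)"
  using gs[OF gpd] aM g_unit[OF gpd aM] g_inv_idm[OF gpd] by simp_all

abbreviation "U1 \<equiv> Mult a (idm G (cod G a)) \<odot> (ident a \<diamond> Eta (cod G a))"
abbreviation "U2 \<equiv> Mult (idm G (groupoid.dom G a)) a \<odot> (Eta (groupoid.dom G a) \<diamond> ident a)"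

lemma hU1: "hreq G U1 (ident a)"
  using hq_ax[OF hr_ax.h_unitr[where G=G and g=a]] aM by simp
lemma hU2: "hreq G U2 (ident a)"
  using hq_ax[OF hr_ax.h_unitl[where G=G and g=a]] aM by simp
lemma haa: "hreq G (ident a \<odot> ident a) (ident a)"
  by (rule hq_idl) (simp_all add: aM)

lemma BFK: "hreq G (Mult (idm G (groupoid.dom G a)) a \<odot> (S (idm G (groupoid.dom G a)) \<diamond> (U1 \<odot> U2)) \<odot> (Eta (groupoid.dom G a) \<diamond> U1))
   (ident a)"
proof -
  let ?j = "groupoid.dom G a"
  let ?e = "idm G ?j"
  have s1: "hreq G (S ?e \<diamond> (U1 \<odot> U2)) (S ?e \<diamond> ident a)"
    by (rule hq_tensr, simp add: aM, rule hreq.trans[OF hq_comp[OF hU1 hU2] haa]) (simp add: aM)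
  have s2: "hreq G (Eta ?j \<diamond> U1) (Eta ?j \<diamond> ident a)"
    by (rule hq_tensr[OF _ hU1]) simp
  have "hreq G (Mult ?e a \<odot> (S ?e \<diamond> (U1 \<odot> U2)) \<odot> (Eta ?j \<diamond> U1)) (Mult ?e a \<odot> (S ?e \<diamond> ident a) \<odot> (Eta ?j \<diamond> ident a))"
    by (rule hq_compr, simp add: aM, rule hq_comp[OF s1 s2]) (simp_all add: aM)
  also have "hreq G (Mult ?e a \<odot> (S ?e \<diamond> ident a) \<odot> (Eta ?j \<diamond> ident a)) (Mult ?e a \<odot> ((S ?e \<odot> Eta ?j) \<diamond> (ident a \<odot> ident a)))"
    by (rule hq_compr, simp add: aM, rule hreq.sym, rule hq_inter) (simp_all add: aM)
  also have "hreq G (Mult ?e a \<odot> ((S ?e \<odot> Eta ?j) \<diamond> (ident a \<odot> ident a))) (Mult ?e a \<odot> (Eta ?j \<diamond> ident a))"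
    by (rule hq_compr, simp add: aM, rule hreq.tens_cong[OF D_Seta[OF gpd] haa]) (simp_all add: aM)
  also have "hreq G (Mult ?e a \<odot> (Eta ?j \<diamond> ident a)) (ident a)" by (rule hU2)
  finally show ?thesis .
qed

lemma BKF: "hreq G (Mult a (idm G (cod G a)) \<odot> ((U2 \<odot> U1) \<diamond> S (idm G (cod G a))) \<odot> (U2 \<diamond> Eta (cod G a)))
   (ident a)"
proof -
  let ?c = "cod G a"
  let ?e = "idm G ?c"
  have s1: "hreq G ((U2 \<odot> U1) \<diamond> S ?e) (ident a \<diamond> S ?e)"
    by (rule hq_tensl, rule hreq.trans[OF hq_comp[OF hU2 hU1] haa]) (simp_all add: aM)
  have s2: "hreq G (U2 \<diamond> Eta ?c) (ident a \<diamond> Eta ?c)"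
    by (rule hq_tensl[OF hU2]) simp
  have "hreq G (Mult a ?e \<odot> ((U2 \<odot> U1) \<diamond> S ?e) \<odot> (U2 \<diamond> Eta ?c)) (Mult a ?e \<odot> (ident a \<diamond> S ?e) \<odot> (ident a \<diamond> Eta ?c))"
    by (rule hq_compr, simp add: aM, rule hq_comp[OF s1 s2]) (simp_all add: aM)
  also have "hreq G (Mult a ?e \<odot> (ident a \<diamond> S ?e) \<odot> (ident a \<diamond> Eta ?c)) (Mult a ?e \<odot> ((ident a \<odot> ident a) \<diamond> (S ?e \<odot> Eta ?c)))"
    by (rule hq_compr, simp add: aM, rule hreq.sym, rule hq_inter) (simp_all add: aM)
  also have "hreq G (Mult a ?e \<odot> ((ident a \<odot> ident a) \<diamond> (S ?e \<odot> Eta ?c))) (Mult a ?e \<odot> (ident a \<diamond> Eta ?c))"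
    by (rule hq_compr, simp add: aM, rule hreq.tens_cong[OF haa D_Seta[OF gpd]]) (simp_all add: aM)
  also have "hreq G (Mult a ?e \<odot> (ident a \<diamond> Eta ?c)) (ident a)" by (rule hU1)
  finally show ?thesis .
qed
end

context emb begin
lemma F_dom_s[simp]: "n \<in> Fs \<Longrightarrow> groupoid.dom G' n \<in> KO \<longleftrightarrow> False" using F_dom by blast
lemma F_cod_s[simp]: "n \<in> Fs \<Longrightarrow> cod G' n \<in> KO \<longleftrightarrow> False" using F_cod by blast
lemma F_dom_obj[simp]: "n \<in> Fs \<Longrightarrow> groupoid.dom G' n \<in> Obj G'" using F_mor gs' by blast
lemma F_cod_obj[simp]: "n \<in> Fs \<Longrightarrow> cod G' n \<in> Obj G'" using F_mor gs' by blast
lemma KO_neq1[simp]: "x \<in> KO \<Longrightarrow> y \<notin> KO \<Longrightarrow> x = y \<longleftrightarrow> False" by blast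
lemma KO_neq2[simp]: "x \<in> KO \<Longrightarrow> y \<notin> KO \<Longrightarrow> y = x \<longleftrightarrow> False" by blast


lemma K_cancel: "h \<in> K \<Longrightarrow> g \<in> Mor G' \<Longrightarrow> cod G' g = groupoid.dom G' h \<Longrightarrow> groupoid.comp G' g h \<in> K \<Longrightarrow> g \<in> K"
proof -
  assume a: "h \<in> K" "g \<in> Mor G'" "cod G' g = groupoid.dom G' h" "groupoid.comp G' g h \<in> K"
  have "groupoid.comp G' (groupoid.comp G' g h) (groupoid.inv G' h) = g"
    using g_cancel[OF gG' a(2) _ a(3)] a(1) by simp
  moreover have "cod G' (groupoid.comp G' g h) = groupoid.dom G' (groupoid.inv G' h)"
    using a gs' by simp
  ultimately show ?thesis using K_comp[of "groupoid.comp G' g h" "groupoid.inv G' h"] a by simp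
qed
lemma F_cancel: "h \<in> Fs \<Longrightarrow> g \<in> Mor G' \<Longrightarrow> cod G' g = groupoid.dom G' h \<Longrightarrow> groupoid.comp G' g h \<in> Fs \<Longrightarrow> g \<in> Fs"
  unfolding Fs_def using gs' by auto
lemma K_invD: "g \<in> Mor G' \<Longrightarrow> groupoid.inv G' g \<in> K \<Longrightarrow> g \<in> K"
  using K_inv g_inv_inv[OF gG'] by metis
lemma F_invD: "g \<in> Mor G' \<Longrightarrow> groupoid.inv G' g \<in> Fs \<Longrightarrow> g \<in> Fs"
  using F_inv g_inv_inv[OF gG'] by metis

definition "E l r \<longleftrightarrow> (zr l = zr r) \<and> (\<not> zr l \<longrightarrow> hreq G (Rr l) (Rr r))"

lemma E_T: "src G' l = src G' r \<Longrightarrow> trg G' l = trg G' r \<Longrightarrow> hasT (src G' l) \<or> hasT (trg G' l) \<Longrightarrow> E l r"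
  unfolding E_def using zr_intro[of l] zr_intro[of r] by auto

lemma E_F: "wf G' l \<Longrightarrow> wf G' r \<Longrightarrow> labF l \<Longrightarrow> labF r \<Longrightarrow> E l r"
  unfolding E_def using F_case[of l] F_case[of r] by (auto intro: hreq.trans hreq.sym)

lemma GEN: "(l, r) \<in> hr_ax G' \<Longrightarrow> wf G' l \<Longrightarrow> wf G' r \<Longrightarrow> src G' l = src G' r \<Longrightarrow> trg G' l = trg G' r \<Longrightarrow>
  hasT (src G' l) \<or> hasT (trg G' l) \<or> (labK l \<and> labK r) \<or> (labF l \<and> labF r) \<Longrightarrow> E l r"
  using E_T[of l r] E_F[of l r] K_case[of l r] unfolding E_def by blast

lemma L_noz: "wf G' t \<Longrightarrow> set2_tm t \<subseteq> K \<union> Fs \<Longrightarrow> set (src G' t) \<subseteq> K \<union> Fs \<and> set (trg G' t) \<subseteq> K \<union> Fs \<and> \<not> zr t"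
proof (induction t)
  case (Mult g h)
  then show ?case using KF_comp1[of g h] KF_comp2[of g h] by (auto simp: hasT_def isT_def)
next
  case (Eta i)
  then show ?case by (cases "i \<in> KO") (auto simp: hasT_def isT_def)
next
  case (Lsm i)
  then show ?case by (cases "i \<in> KO") (auto simp: hasT_def isT_def)
qed (auto simp: hasT_def isT_def)

lemma E_strip: "wf G' l \<Longrightarrow> wf G' r \<Longrightarrow> set2_tm l \<subseteq> K \<union> Fs \<Longrightarrow> set2_tm r \<subseteq> K \<union> Fs \<Longrightarrow>
   hreq G (strip (Rr l)) (strip (Rr r)) \<Longrightarrow> E l r"
proof -
  assume a: "wf G' l" "wf G' r" "set2_tm l \<subseteq> K \<union> Fs" "set2_tm r \<subseteq> K \<union> Fs" "hreq G (strip (Rr l)) (strip (Rr r))"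
  have z: "\<not> zr l" "\<not> zr r" using L_noz a by auto
  have w: "wf G (Rr l)" "wf G (Rr r)" using Rr_wf a z by auto
  have "hreq G (Rr l) (Rr r)"
    using hreq.trans[OF strip_ok[OF w(1)] hreq.trans[OF a(5) hreq.sym[OF strip_ok[OF w(2)]]]] .
  then show ?thesis using z unfolding E_def by simp
qed

end

context emb begin

lemma E_I: "(zr l \<longleftrightarrow> zr r) \<Longrightarrow> (\<not> zr l \<Longrightarrow> \<not> zr r \<Longrightarrow> (Rr l, Rr r) \<in> hr_ax G) \<Longrightarrow> wf G' l \<Longrightarrow> wf G' r \<Longrightarrow>
   src G' l = src G' r \<Longrightarrow> trg G' l = trg G' r \<Longrightarrow> E l r"
  unfolding E_def using Rr_wf[of l] Rr_wf[of r] by (auto intro: hreq.ax)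

lemma zr_trg: "hasT (trg G' t) \<Longrightarrow> zr t" using zr_intro by blast
lemma zr_src: "hasT (src G' t) \<Longrightarrow> zr t" using zr_intro by blast

lemma AX: assumes ax: "(l, r) \<in> hr_ax G'" and wl: "wf G' l" and wr: "wf G' r"
    and s: "src G' l = src G' r" and t: "trg G' l = trg G' r"
  shows "E l r"
  using ax
proof (cases rule: hr_ax.cases)
  case (c_assoc f g h)
  show ?thesis
    by (rule E_I[OF _ _ wl wr s t]) (use wl  in \<open>auto simp: c_assoc intro: hr_ax.intros zr_trg zr_src\<close>)
next
  case (c_idl A)
  show ?thesis
    by (rule E_I[OF _ _ wl wr s t]) (use wl  in \<open>auto simp: c_idl intro: hr_ax.intros zr_trg zr_src\<close>)
next
  case (c_idr A)
  show ?thesis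
    by (rule E_I[OF _ _ wl wr s t]) (use wl  in \<open>auto simp: c_idr intro: hr_ax.intros zr_trg zr_src\<close>)
next
  case (t_assoc f g h)
  show ?thesis
    by (rule E_I[OF _ _ wl wr s t]) (use wl  in \<open>auto simp: t_assoc intro: hr_ax.intros zr_trg zr_src\<close>)
next
  case (t_unitl)
  show ?thesis
    by (rule E_I[OF _ _ wl wr s t]) (use wl  in \<open>auto simp: t_unitl intro: hr_ax.intros zr_trg zr_src\<close>)
next
  case (t_unitr)
  show ?thesis
    by (rule E_I[OF _ _ wl wr s t]) (use wl  in \<open>auto simp: t_unitr intro: hr_ax.intros zr_trg zr_src\<close>)
next
  case (t_id A B)
  show ?thesis
    by (rule E_I[OF _ _ wl wr s t]) (use wl  in \<open>auto simp: t_id intro: hr_ax.intros zr_trg zr_src\<close>)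
next
  case (t_interchange f g f' g')
  show ?thesis
    by (rule E_I[OF _ _ wl wr s t]) (use wl  in \<open>auto simp: t_interchange intro: hr_ax.intros zr_trg zr_src\<close>)
next
  case (b_inv1 A B)
  show ?thesis
    by (rule E_I[OF _ _ wl wr s t]) (use wl  in \<open>auto simp: b_inv1 intro: hr_ax.intros zr_trg zr_src\<close>)
next
  case (b_inv2 A B)
  show ?thesis
    by (rule E_I[OF _ _ wl wr s t]) (use wl  in \<open>auto simp: b_inv2 intro: hr_ax.intros zr_trg zr_src\<close>)
next
  case (b_nat f g)
  have w: "wf G' f" "wf G' g" using wl b_nat by auto
  show ?thesis
    by (rule E_I[OF _ _ wl wr s t]) (use w Rr_wf[of f] Rr_wf[of g] hr_ax.b_nat[where G=G and f="Rr f" and g="Rr g"] in \<open>auto simp: b_nat intro: zr_trg zr_src\<close>)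
next
  case (b_hex1 A B C)
  show ?thesis
    by (rule E_I[OF _ _ wl wr s t]) (use wl  in \<open>auto simp: b_hex1 intro: hr_ax.intros zr_trg zr_src\<close>)
next
  case (b_hex2 A B C)
  show ?thesis
    by (rule E_I[OF _ _ wl wr s t]) (use wl  in \<open>auto simp: b_hex2 intro: hr_ax.intros zr_trg zr_src\<close>)
next
  case (h_coassoc g)
  have g: "g \<in> Mor G'" using wl h_coassoc by (auto simp: sig_def mu_def split: if_splits)
  show ?thesis
    by (rule GEN[OF ax wl wr s t]) (use g T_split[of g] in \<open>auto simp: h_coassoc labK_def labF_def sig_def mu_def gs'\<close>)
next
  case (h_counitl g)
  have g: "g \<in> Mor G'" using wl h_counitl by (auto simp: sig_def mu_def split: if_splits)
  show ?thesis
    by (rule GEN[OF ax wl wr s t]) (use g T_split[of g] in \<open>auto simp: h_counitl labK_def labF_def sig_def mu_def gs'\<close>)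
next
  case (h_counitr g)
  have g: "g \<in> Mor G'" using wl h_counitr by (auto simp: sig_def mu_def split: if_splits)
  show ?thesis
    by (rule GEN[OF ax wl wr s t]) (use g T_split[of g] in \<open>auto simp: h_counitr labK_def labF_def sig_def mu_def gs'\<close>)
next
  case (h_unitr g)
  have g: "g \<in> Mor G'" using wl h_unitr by (auto simp: sig_def mu_def split: if_splits)
  show ?thesis
    by (rule GEN[OF ax wl wr s t]) (use g T_split[of g] in \<open>auto simp: h_unitr labK_def labF_def sig_def mu_def gs'\<close>)
next
  case (h_unitl g)
  have g: "g \<in> Mor G'" using wl h_unitl by (auto simp: sig_def mu_def split: if_splits)
  show ?thesis
    by (rule GEN[OF ax wl wr s t]) (use g T_split[of g] in \<open>auto simp: h_unitl labK_def labF_def sig_def mu_def gs'\<close>)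
next
  case (h_antipl g)
  have g: "g \<in> Mor G'" using wl h_antipl by (auto simp: sig_def mu_def split: if_splits)
  show ?thesis
    by (rule GEN[OF ax wl wr s t]) (use g T_split[of g] in \<open>auto simp: h_antipl labK_def labF_def sig_def mu_def gs'\<close>)
next
  case (h_antipr g)
  have g: "g \<in> Mor G'" using wl h_antipr by (auto simp: sig_def mu_def split: if_splits)
  show ?thesis
    by (rule GEN[OF ax wl wr s t]) (use g T_split[of g] in \<open>auto simp: h_antipr labK_def labF_def sig_def mu_def gs'\<close>)
next
  case (h_sinv1 g)
  have g: "g \<in> Mor G'" using wl h_sinv1 by (auto simp: sig_def mu_def split: if_splits)
  show ?thesis
    by (rule GEN[OF ax wl wr s t]) (use g T_split[of g] in \<open>auto simp: h_sinv1 labK_def labF_def sig_def mu_def gs'\<close>)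
next
  case (h_sinv2 g)
  have g: "g \<in> Mor G'" using wl h_sinv2 by (auto simp: sig_def mu_def split: if_splits)
  show ?thesis
    by (rule GEN[OF ax wl wr s t]) (use g T_split[of g] in \<open>auto simp: h_sinv2 labK_def labF_def sig_def mu_def gs'\<close>)
next
  case (r_vinv1 g)
  have g: "g \<in> Mor G'" using wl r_vinv1 by (auto simp: sig_def mu_def split: if_splits)
  show ?thesis
    by (rule GEN[OF ax wl wr s t]) (use g T_split[of g] in \<open>auto simp: r_vinv1 labK_def labF_def sig_def mu_def gs'\<close>)
next
  case (r_vinv2 g)
  have g: "g \<in> Mor G'" using wl r_vinv2 by (auto simp: sig_def mu_def split: if_splits)
  show ?thesis
    by (rule GEN[OF ax wl wr s t]) (use g T_split[of g] in \<open>auto simp: r_vinv2 labK_def labF_def sig_def mu_def gs'\<close>)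
next
  case (r_epsv g)
  have g: "g \<in> Mor G'" using wl r_epsv by (auto simp: sig_def mu_def split: if_splits)
  show ?thesis
    by (rule GEN[OF ax wl wr s t]) (use g T_split[of g] in \<open>auto simp: r_epsv labK_def labF_def sig_def mu_def gs'\<close>)
next
  case (r_vL g)
  have g: "g \<in> Mor G'" using wl r_vL by (auto simp: sig_def mu_def split: if_splits)
  show ?thesis
    by (rule GEN[OF ax wl wr s t]) (use g T_split[of g] in \<open>auto simp: r_vL labK_def labF_def sig_def mu_def gs'\<close>)
next
  case (r_Sv g)
  have g: "g \<in> Mor G'" using wl r_Sv by (auto simp: sig_def mu_def split: if_splits)
  show ?thesis
    by (rule GEN[OF ax wl wr s t]) (use g T_split[of g] in \<open>auto simp: r_Sv labK_def labF_def sig_def mu_def gs'\<close>)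
next
  case (r_twist g)
  have g: "g \<in> Mor G'" using wl r_twist by (auto simp: sig_def mu_def split: if_splits)
  show ?thesis
    by (rule GEN[OF ax wl wr s t]) (use g T_split[of g] in \<open>auto simp: r_twist labK_def labF_def sig_def mu_def gs'\<close>)
next
  case (i_SL g)
  have g: "g \<in> Mor G'" using wl i_SL by auto
  consider "isT (groupoid.inv G' g)" | "g \<in> K" | "g \<in> Fs"
    using T_split[of "groupoid.inv G' g"] K_invD[OF g] F_invD[OF g] by blast
  then show ?thesis
  proof cases
    case 1
    then have "hasT (trg G' l)" using t i_SL by simp
    then show ?thesis by (intro GEN[OF ax wl wr s t]) simp
  next
    case 2
    then have "labK l \<and> labK r" using i_SL unfolding labK_def by simp
    then show ?thesis by (intro GEN[OF ax wl wr s t]) simp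
  next
    case 3
    then have "labF l \<and> labF r" using i_SL unfolding labF_def by simp
    then show ?thesis by (intro GEN[OF ax wl wr s t]) simp
  qed
next
  case (h_bialg g h)
  have g: "g \<in> Mor G'" "h \<in> Mor G'" "cod G' g = groupoid.dom G' h" using wl h_bialg by auto
  show ?thesis
    by (rule GEN[OF ax wl wr s t]) (use g T_split[of g] T_split[of h] KF_comp1[of g h] KF_comp2[of g h] in \<open>auto simp: h_bialg labK_def labF_def gs'\<close>)
next
  case (h_epsm g h)
  have g: "g \<in> Mor G'" "h \<in> Mor G'" "cod G' g = groupoid.dom G' h" using wl h_epsm by auto
  show ?thesis
    by (rule GEN[OF ax wl wr s t]) (use g T_split[of g] T_split[of h] KF_comp1[of g h] KF_comp2[of g h] in \<open>auto simp: h_epsm labK_def labF_def gs'\<close>)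
next
  case (r_mv1 g h)
  have g: "g \<in> Mor G'" "h \<in> Mor G'" "cod G' g = groupoid.dom G' h" using wl r_mv1 by auto
  show ?thesis
    by (rule GEN[OF ax wl wr s t]) (use g T_split[of g] T_split[of h] KF_comp1[of g h] KF_comp2[of g h] in \<open>auto simp: r_mv1 labK_def labF_def gs'\<close>)
next
  case (r_mv2 g h)
  have g: "g \<in> Mor G'" "h \<in> Mor G'" "cod G' g = groupoid.dom G' h" using wl r_mv2 by auto
  show ?thesis
    by (rule GEN[OF ax wl wr s t]) (use g T_split[of g] T_split[of h] KF_comp1[of g h] KF_comp2[of g h] in \<open>auto simp: r_mv2 labK_def labF_def gs'\<close>)
next
  case (h_massoc g h k)
  have g: "g \<in> Mor G'" "h \<in> Mor G'" "k \<in> Mor G'" "cod G' g = groupoid.dom G' h" "cod G' h = groupoid.dom G' k" using wl h_massoc by (auto simp: gs')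
  show ?thesis
    by (rule GEN[OF ax wl wr s t]) (use g T_split[of g] T_split[of h] T_split[of k] KF_comp1[of g h] KF_comp2[of g h] KF_comp1[of h k] KF_comp2[of h k] in \<open>auto simp: h_massoc labK_def labF_def gs'\<close>)
next
  case (i_right g h)
  have g: "g \<in> Mor G'" "h \<in> Mor G'" "cod G' g = groupoid.dom G' h" using wl i_right by auto
  have c: "cod G' (groupoid.comp G' g h) = cod G' h" using g gs' by simp
  consider "isT h \<or> isT (groupoid.comp G' g h)" | "h \<in> K" "g \<in> K" "groupoid.comp G' g h \<in> K" | "h \<in> Fs" "g \<in> Fs" "groupoid.comp G' g h \<in> Fs"
  proof -
    assume a1: "isT h \<or> isT (groupoid.comp G' g h) \<Longrightarrow> thesis"
      and a2: "h \<in> K \<Longrightarrow> g \<in> K \<Longrightarrow> groupoid.comp G' g h \<in> K \<Longrightarrow> thesis"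
      and a3: "h \<in> Fs \<Longrightarrow> g \<in> Fs \<Longrightarrow> groupoid.comp G' g h \<in> Fs \<Longrightarrow> thesis"
    show thesis
    proof (cases "isT h \<or> isT (groupoid.comp G' g h)")
      case True then show ?thesis by (rule a1)
    next
      case False
      then have h: "h \<in> K \<or> h \<in> Fs" and cc: "groupoid.comp G' g h \<in> K \<or> groupoid.comp G' g h \<in> Fs"
        unfolding isT_def by auto
      show ?thesis
      proof (cases "h \<in> K")
        case True
        then have "cod G' (groupoid.comp G' g h) \<in> KO" using c by simp
        then have "groupoid.comp G' g h \<in> K" using cc F_cod by blast
        then show ?thesis using a2 True K_cancel[OF True g(1) g(3)] by blast
      next
        case False
        then have hF: "h \<in> Fs" using h by blast
        then have "cod G' (groupoid.comp G' g h) \<notin> KO" using c F_cod by simp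
        then have "groupoid.comp G' g h \<in> Fs" using cc K_cod by blast
        then show ?thesis using a3 hF F_cancel[OF hF g(1) g(3)] by blast
      qed
    qed
  qed
  then show ?thesis
  proof cases
    case 1
    then have "hasT (src G' l) \<or> hasT (trg G' l)" using i_right by auto
    then show ?thesis by (intro GEN[OF ax wl wr s t]) blast
  next
    case 2
    then have "labK l \<and> labK r" using i_right unfolding labK_def by simp
    then show ?thesis by (intro GEN[OF ax wl wr s t]) simp
  next
    case 3
    then have "labF l \<and> labF r" using i_right unfolding labF_def by simp
    then show ?thesis by (intro GEN[OF ax wl wr s t]) simp
  qed
next
  case (h_deltaeta i)
  have i: "i \<in> Obj G'" using wl h_deltaeta by auto
  show ?thesis
    by (rule GEN[OF ax wl wr s t]) (use i in \<open>cases "i \<in> KO"; auto simp: h_deltaeta labK_def labF_def gs'\<close>)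
next
  case (h_epseta i)
  have i: "i \<in> Obj G'" using wl h_epseta by auto
  show ?thesis
    by (rule GEN[OF ax wl wr s t]) (use i in \<open>cases "i \<in> KO"; auto simp: h_epseta labK_def labF_def gs'\<close>)
next
  case (i_left i)
  have i: "i \<in> Obj G'" using wl i_left by auto
  show ?thesis
    by (rule GEN[OF ax wl wr s t]) (use i in \<open>cases "i \<in> KO"; auto simp: i_left labK_def labF_def gs'\<close>)
next
  case (i_norm1 i)
  have i: "i \<in> Obj G'" using wl i_norm1 by auto
  show ?thesis
    by (rule GEN[OF ax wl wr s t]) (use i in \<open>cases "i \<in> KO"; auto simp: i_norm1 labK_def labF_def gs'\<close>)
next
  case (i_norm2 i)
  have i: "i \<in> Obj G'" using wl i_norm2 by auto
  show ?thesis
    by (rule GEN[OF ax wl wr s t]) (use i in \<open>cases "i \<in> KO"; auto simp: i_norm2 labK_def labF_def gs'\<close>)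
next
  case (i_lS i)
  have i: "i \<in> Obj G'" using wl i_lS by auto
  show ?thesis
    by (rule GEN[OF ax wl wr s t]) (use i in \<open>cases "i \<in> KO"; auto simp: i_lS labK_def labF_def gs'\<close>)
next
  case (r_cop1 i j)
  have ij: "i \<in> Obj G'" "j \<in> Obj G'" using wl r_cop1 by (auto simp: sig_def split: if_splits)
  show ?thesis
  proof (cases "i \<in> KO"; cases "j \<in> KO")
    assume "i \<in> KO" "j \<in> KO"
    then show ?thesis
      by (intro GEN[OF ax wl wr s t]) (use ij in \<open>auto simp: r_cop1 labK_def labF_def sig_def\<close>)
  next
    assume "i \<notin> KO" "j \<notin> KO"
    then show ?thesis
      by (intro GEN[OF ax wl wr s t]) (use ij in \<open>auto simp: r_cop1 labK_def labF_def sig_def\<close>)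
  next
    assume i: "i \<notin> KO" and j: "j \<in> KO"
    then have ne: "i \<noteq> j" by blast
    show ?thesis
      by (rule E_strip[OF wl wr]) (use ij i j ne hreq.sym[OF D1[OF gG psio_obj[OF j]]] in \<open>auto simp: r_cop1 sig_def Let_def\<close>)
  next
    assume i: "i \<in> KO" and j: "j \<notin> KO"
    then have ne: "i \<noteq> j" by blast
    show ?thesis
      by (rule E_strip[OF wl wr]) (use ij i j ne D2[OF gG psio_obj[OF i]] in \<open>auto simp: r_cop1 sig_def Let_def\<close>)
  qed
next
  case (r_cop2 i j)
  have ij: "i \<in> Obj G'" "j \<in> Obj G'" using wl r_cop2 by (auto simp: sig_def split: if_splits)
  show ?thesis
  proof (cases "i \<in> KO"; cases "j \<in> KO")
    assume "i \<in> KO" "j \<in> KO"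
    then show ?thesis
      by (intro GEN[OF ax wl wr s t]) (use ij in \<open>auto simp: r_cop2 labK_def labF_def sig_def\<close>)
  next
    assume "i \<notin> KO" "j \<notin> KO"
    then show ?thesis
      by (intro GEN[OF ax wl wr s t]) (use ij in \<open>auto simp: r_cop2 labK_def labF_def sig_def\<close>)
  next
    assume i: "i \<notin> KO" and j: "j \<in> KO"
    then have ne: "i \<noteq> j" by blast
    show ?thesis
      by (rule E_strip[OF wl wr]) (use ij i j ne D3[OF gG psio_obj[OF j]] in \<open>auto simp: r_cop2 sig_def Let_def\<close>)
  next
    assume i: "i \<in> KO" and j: "j \<notin> KO"
    then have ne: "i \<noteq> j" by blast
    show ?thesis
      by (rule E_strip[OF wl wr]) (use ij i j ne hreq.sym[OF D4[OF gG psio_obj[OF i]]] in \<open>auto simp: r_cop2 sig_def Let_def\<close>)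
  qed
next
  case (r_cop3 i j)
  have ij: "i \<in> Obj G'" "j \<in> Obj G'" using wl r_cop3 by (auto simp: sig_def split: if_splits)
  show ?thesis
  proof (cases "i \<in> KO"; cases "j \<in> KO")
    assume "i \<in> KO" "j \<in> KO"
    then show ?thesis
      by (intro GEN[OF ax wl wr s t]) (use ij in \<open>auto simp: r_cop3 labK_def labF_def sig_def\<close>)
  next
    assume "i \<notin> KO" "j \<notin> KO"
    then show ?thesis
      by (intro GEN[OF ax wl wr s t]) (use ij in \<open>auto simp: r_cop3 labK_def labF_def sig_def\<close>)
  next
    assume i: "i \<notin> KO" and j: "j \<in> KO"
    then have ne: "i \<noteq> j" by blast
    show ?thesis
      by (rule E_strip[OF wl wr]) (use ij i j ne hreq.refl[of G "Eta (psio j)"] in \<open>auto simp: r_cop3 sig_def Let_def\<close>)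
  next
    assume i: "i \<in> KO" and j: "j \<notin> KO"
    then have ne: "i \<noteq> j" by blast
    show ?thesis
      by (rule E_strip[OF wl wr]) (use ij i j ne D_epseta[OF gG psio_obj[OF i]] in \<open>auto simp: r_cop3 sig_def Let_def\<close>)
  qed
next
  case (r_cop4 i j)
  have ij: "i \<in> Obj G'" "j \<in> Obj G'" using wl r_cop4 by (auto simp: sig_def split: if_splits)
  show ?thesis
  proof (cases "i \<in> KO"; cases "j \<in> KO")
    assume "i \<in> KO" "j \<in> KO"
    then show ?thesis
      by (intro GEN[OF ax wl wr s t]) (use ij in \<open>auto simp: r_cop4 labK_def labF_def sig_def\<close>)
  next
    assume "i \<notin> KO" "j \<notin> KO"
    then show ?thesis
      by (intro GEN[OF ax wl wr s t]) (use ij in \<open>auto simp: r_cop4 labK_def labF_def sig_def\<close>)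
  next
    assume i: "i \<notin> KO" and j: "j \<in> KO"
    then have ne: "i \<noteq> j" by blast
    show ?thesis
      by (rule E_strip[OF wl wr]) (use ij i j ne D_epseta[OF gG psio_obj[OF j]] in \<open>auto simp: r_cop4 sig_def Let_def\<close>)
  next
    assume i: "i \<in> KO" and j: "j \<notin> KO"
    then have ne: "i \<noteq> j" by blast
    show ?thesis
      by (rule E_strip[OF wl wr]) (use ij i j ne hreq.refl[of G "Eta (psio i)"] in \<open>auto simp: r_cop4 sig_def Let_def\<close>)
  qed
next
  case (r_braid h g)
  have gh: "g \<in> Mor G'" "h \<in> Mor G'" using wl r_braid by auto
  consider "isT g \<or> isT h" | "g \<in> K" "h \<in> K" | "g \<in> Fs" "h \<in> Fs" | "g \<in> K" "h \<in> Fs" | "g \<in> Fs" "h \<in> K"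
    using T_split[of g] T_split[of h] by blast
  then show ?thesis
  proof cases
    case 1
    then have "hasT (src G' l)" using s r_braid by simp
    then show ?thesis by (intro GEN[OF ax wl wr s t]) simp
  next
    case 2
    then show ?thesis
      by (intro GEN[OF ax wl wr s t]) (auto simp: r_braid labK_def labF_def sig_def mu_def rho_l_def rho_r_def)
  next
    case 3
    then show ?thesis
      by (intro GEN[OF ax wl wr s t]) (auto simp: r_braid labK_def labF_def sig_def mu_def rho_l_def rho_r_def)
  next
    case 4
    show ?thesis
      by (rule E_strip[OF wl wr]) (use 4 BKF[OF gG psi_mor[OF \<open>g \<in> K\<close>]] in \<open>auto simp: r_braid sig_def mu_def rho_l_def rho_r_def Let_def\<close>)
  next
    case 5
    show ?thesis
      by (rule E_strip[OF wl wr]) (use 5 BFK[OF gG psi_mor[OF \<open>h \<in> K\<close>]] in \<open>auto simp: r_braid sig_def mu_def rho_l_def rho_r_def Let_def\<close>)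
  qed
qed

end

context emb begin

lemma hreq_E: "hreq G' t u \<Longrightarrow> E t u"
proof (induction rule: hreq.induct)
  case (ax l r)
  then show ?case using AX by blast
next
  case (refl t)
  then show ?case unfolding E_def using Rr_wf[of t] by (auto intro: hreq.refl)
next
  case (sym t u)
  then show ?case unfolding E_def by (auto intro: hreq.sym)
next
  case (trans t u w)
  then show ?case unfolding E_def by (auto intro: hreq.trans)
next
  case (comp_cong f f' g g')
  have w: "wf G' f" "wf G' g" "trg G' g = src G' f" using comp_cong.hyps(3) by auto
  show ?case
  proof (cases "zr (f \<odot> g)")
    case True
    then show ?thesis using comp_cong.IH unfolding E_def by auto
  next
    case False
    then have z: "\<not> zr f" "\<not> zr g" by auto
    have "trg G (Rr g) = src G (Rr f)" using Rr_wf[OF w(1) z(1)] Rr_wf[OF w(2) z(2)] w(3) by simp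
    then have "hreq G (Rr f \<odot> Rr g) (Rr f' \<odot> Rr g')"
      using comp_cong.IH z unfolding E_def by (auto intro: hq_comp)
    then show ?thesis using comp_cong.IH z unfolding E_def by auto
  qed
next
  case (tens_cong f f' g g')
  then show ?case unfolding E_def by (auto intro: hreq.tens_cong)
qed

lemma faithful: "wf G t \<Longrightarrow> wf G u \<Longrightarrow> hreq G' (map_tm Fo Fm t) (map_tm Fo Fm u) \<Longrightarrow> hreq G t u"
  using hreq_E[of "map_tm Fo Fm t" "map_tm Fo Fm u"] Rr_ups[of t] Rr_ups[of u] unfolding E_def by auto

end

theorem proposition6p4:
  fixes G :: "('o, 'm) groupoid" and G' :: "('p, 'n) groupoid"
    and Fo :: "'o \<Rightarrow> 'p" and Fm :: "'m \<Rightarrow> 'n"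
  assumes "is_groupoid G" and "is_groupoid G'"
    and "is_functor G G' Fo Fm"
    and "inj_on Fo (Obj G)"
  shows "(\<forall>t. wf G t \<longrightarrow> wf G' (Upsilon Fo Fm t)
              \<and> src G' (Upsilon Fo Fm t) = map Fm (src G t)
              \<and> trg G' (Upsilon Fo Fm t) = map Fm (trg G t))
       \<and> (\<forall>t u. hreq G t u \<longrightarrow> hreq G' (Upsilon Fo Fm t) (Upsilon Fo Fm u))
       \<and> (inj_on Fm (Mor G) \<longrightarrow>
            (\<forall>t u. wf G t \<longrightarrow> wf G u \<longrightarrow> src G t = src G u \<longrightarrow> trg G t = trg G u \<longrightarrow>
               hreq G' (Upsilon Fo Fm t) (Upsilon Fo Fm u) \<longrightarrow> hreq G t u))"
proof (intro conjI allI impI)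
  fix t assume "wf G t"
  then show "wf G' (Upsilon Fo Fm t)" "src G' (Upsilon Fo Fm t) = map Fm (src G t)"
    "trg G' (Upsilon Fo Fm t) = map Fm (trg G t)"
    using ups_wf[OF assms(1-3)] by auto
next
  fix t u assume "hreq G t u"
  then show "hreq G' (Upsilon Fo Fm t) (Upsilon Fo Fm u)" using ups_hreq[OF assms] by blast
next
  fix t u assume inj: "inj_on Fm (Mor G)" and "wf G t" "wf G u"
    "hreq G' (Upsilon Fo Fm t) (Upsilon Fo Fm u)"
  interpret emb G G' Fo Fm using assms inj by unfold_locales
  show "hreq G t u" using faithful \<open>wf G t\<close> \<open>wf G u\<close> \<open>hreq G' _ _\<close> by blast
qed

end
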